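(* Let $a,b>0$ and let $p$ be a point of the flat Klein bottle $K_{a,b}$. Let $\sigma$ be the union of the two main geodesics of $K_{a,b}$, and put $\lambda=2d(p,\sigma)/b$; then $\lambda\in[0,1/2]$. <ol> <li>Assume $b<2a$. If $\lambda=0$, then $\#F_p=\#F_p^4=1$. If $\lambda\neq 0$, then $\#F_p=\#F_p^3=2$.</li> <li>Assume $b=2a$. If $\lambda=0$ or $\lambda=1/2$, then $\#F_p=\#F_p^4=1$. Otherwise $\#F_p=\#F_p^3=2$.</li> <li>Assume $b>2a$, and put $\lambda_0=\frac12-\sqrt{\frac14-\frac{a^2}{b^2}}$. <ol> <li>If $\lambda=0$, then $\#F_p=\#F_p^4=1$.</li> <li>If $0<\lambda<\lambda_0$, then $\#F_p=\#F_p^3=2$.</li> <li>If $\lambda=\lambda_0$, then $\#F_p=\#F_p^4=1$.</li> <li>If $\lambda_0<\lambda<1/2$, then $\#F_p=\#F_p^3=1$.</li> <li>If $\lambda=1/2$, then $\#F_p=\#F_p^3=2$.</li> </ol> </li> </ol>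
   Context: For $a,b>0$, $K_{a,b}$ is the flat Klein bottle obtained from an $a\times b$ rectangle by two identifications: the sides of length $a$ are identified by translation, and the sides of length $b$ are identified by the point symmetry about the center of the rectangle. Equivalently, $K_{a,b}=\mathbb{R}^2/G$, where $G$ is generated by $(x,y)\mapsto(x,y+b)$ and $(x,y)\mapsto(x+a,-y)$. It carries the induced intrinsic distance $d$. The $a$-direction is called horizontal. The horizontal closed geodesics all have length $2a$, except two of length $a$, which are called the main geodesics: <ul> <li>the one coming from the $a$-long sides of the rectangle;</li> <li>the one coming from the mid-height horizontal segment of the rectangle.</li> </ul> In the quotient model, the main geodesics are the images of the lines $y=nb/2$, $n\in\mathbb{Z}$. For a point $p$, $F_p$ is the set of points at maximal distance from $p$. A segment is a shortest path. $F_p^n$ is the set of farthest points from $p$ joined to $p$ by exactly $n$ distinct segments. $\#$ denotes cardinality. *)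

theory Defs
  imports "HOL-Analysis.Analysis"
begin

text \<open>The flat Klein bottle K_{a,b} = R^2 / G, with R^2 modelled as real \<times> real
  (whose dist is the Euclidean distance).\<close>

definition ktrans :: "real \<Rightarrow> real \<times> real \<Rightarrow> real \<times> real" where
  "ktrans b = (\<lambda>(x, y). (x, y + b))"

definition kglide :: "real \<Rightarrow> real \<times> real \<Rightarrow> real \<times> real" where
  "kglide a = (\<lambda>(x, y). (x + a, - y))"

inductive_set kgroup :: "real \<Rightarrow> real \<Rightarrow> (real \<times> real \<Rightarrow> real \<times> real) set"
  for a b :: real where
  kg_id: "id \<in> kgroup a b"
| kg_t: "g \<in> kgroup a b \<Longrightarrow> ktrans b \<circ> g \<in> kgroup a b"
| kg_tinv: "g \<in> kgroup a b \<Longrightarrow> inv (ktrans b) \<circ> g \<in> kgroup a b"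
| kg_s: "g \<in> kgroup a b \<Longrightarrow> kglide a \<circ> g \<in> kgroup a b"
| kg_sinv: "g \<in> kgroup a b \<Longrightarrow> inv (kglide a) \<circ> g \<in> kgroup a b"

definition korbit :: "real \<Rightarrow> real \<Rightarrow> real \<times> real \<Rightarrow> (real \<times> real) set" where
  "korbit a b z = {g z | g. g \<in> kgroup a b}"

definition klein :: "real \<Rightarrow> real \<Rightarrow> (real \<times> real) set set" where
  "klein a b = range (korbit a b)"

definition kdist :: "(real \<times> real) set \<Rightarrow> (real \<times> real) set \<Rightarrow> real" where
  "kdist P Q = Inf {dist u v | u v. u \<in> P \<and> v \<in> Q}"

text \<open>Segments (shortest paths) from P to Q, as curves [0,1] \<rightarrow> K_{a,b}:
  projections of straight segments in the cover of length d(P,Q).\<close>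
definition ksegments :: "real \<Rightarrow> real \<Rightarrow> (real \<times> real) set \<Rightarrow> (real \<times> real) set
    \<Rightarrow> (real \<Rightarrow> (real \<times> real) set) set" where
  "ksegments a b P Q = {(\<lambda>t\<in>{0..1}. korbit a b (u + t *\<^sub>R (v - u))) | u v.
      u \<in> P \<and> v \<in> Q \<and> dist u v = kdist P Q}"

definition kfar :: "real \<Rightarrow> real \<Rightarrow> (real \<times> real) set \<Rightarrow> (real \<times> real) set set" where
  "kfar a b P = {Q \<in> klein a b. \<forall>Q' \<in> klein a b. kdist P Q' \<le> kdist P Q}"

definition kfarn :: "real \<Rightarrow> real \<Rightarrow> nat \<Rightarrow> (real \<times> real) set \<Rightarrow> (real \<times> real) set set" where
  "kfarn a b n P = {Q \<in> kfar a b P. card (ksegments a b P Q) = n}"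

text \<open>Union of the two main geodesics: images of the lines y = n b / 2.\<close>
definition kmain :: "real \<Rightarrow> real \<Rightarrow> (real \<times> real) set set" where
  "kmain a b = {korbit a b (x, of_int n * b / 2) | x n. True}"

definition kdist_main :: "real \<Rightarrow> real \<Rightarrow> (real \<times> real) set \<Rightarrow> real" where
  "kdist_main a b P = Inf {kdist P Q | Q. Q \<in> kmain a b}"

end

theory Submission
  imports Defs
begin

definition gel :: "real \<Rightarrow> real \<Rightarrow> int \<Rightarrow> int \<Rightarrow> bool \<Rightarrow> real \<times> real \<Rightarrow> real \<times> real" where
  "gel a b k m s = (\<lambda>(x, y). if s then (x + (2 * of_int k + 1) * a, - y + of_int m * b)
                              else (x + 2 * of_int k * a, y + of_int m * b))"

lemma gel_simp: "gel a b k m s (x, y) = (if s then (x + (2 * of_int k + 1) * a, - y + of_int m * b)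
                              else (x + 2 * of_int k * a, y + of_int m * b))"
  by (simp add: gel_def)

lemma inv_ktrans: "inv (ktrans b) = (\<lambda>(x, y). (x, y - b))"
  by (rule inv_equality) (auto simp: ktrans_def)

lemma inv_kglide: "inv (kglide a) = (\<lambda>(x, y). (x - a, - y))"
  by (rule inv_equality) (auto simp: kglide_def)

lemma kgroup_gel: "g \<in> kgroup a b \<Longrightarrow> \<exists>k m s. g = gel a b k m s"
proof (induction rule: kgroup.induct)
  case kg_id
  have "id = gel a b 0 0 False" by (auto simp: gel_def)
  then show ?case by blast
next
  case (kg_t g)
  then obtain k m s where g: "g = gel a b k m s" by blast
  have "ktrans b \<circ> g = gel a b k (m+1) s"
    by (auto simp: g gel_def ktrans_def algebra_simps)
  then show ?case by blast
next
  case (kg_tinv g)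
  then obtain k m s where g: "g = gel a b k m s" by blast
  have "inv (ktrans b) \<circ> g = gel a b k (m-1) s"
    by (auto simp: g gel_def inv_ktrans algebra_simps)
  then show ?case by blast
next
  case (kg_s g)
  then obtain k m s where g: "g = gel a b k m s" by blast
  show ?case
  proof (cases s)
    case True
    have "kglide a \<circ> g = gel a b (k+1) (-m) False"
      using True by (auto simp: g gel_def kglide_def algebra_simps)
    then show ?thesis by blast
  next
    case False
    have "kglide a \<circ> g = gel a b k (-m) True"
      using False by (auto simp: g gel_def kglide_def algebra_simps)
    then show ?thesis by blast
  qed
next
  case (kg_sinv g)
  then obtain k m s where g: "g = gel a b k m s" by blast
  show ?case
  proof (cases s)
    case True
    have "inv (kglide a) \<circ> g = gel a b k (-m) False"
      using True by (auto simp: g gel_def inv_kglide algebra_simps)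
    then show ?thesis by blast
  next
    case False
    have "inv (kglide a) \<circ> g = gel a b (k-1) (-m) True"
      using False by (auto simp: g gel_def inv_kglide algebra_simps)
    then show ?thesis by blast
  qed
qed

lemma gel0_kgroup: "gel a b 0 m False \<in> kgroup a b"
proof (induction m rule: int_induct[where k=0])
  case base
  have "gel a b 0 0 False = id" by (auto simp: gel_def)
  then show ?case using kgroup.kg_id by metis
next
  case (step1 i)
  have "gel a b 0 (i+1) False = ktrans b \<circ> gel a b 0 i False"
    by (auto simp: gel_def ktrans_def algebra_simps)
  then show ?case using step1 kgroup.kg_t by metis
next
  case (step2 i)
  have "gel a b 0 (i-1) False = inv (ktrans b) \<circ> gel a b 0 i False"
    by (auto simp: gel_def inv_ktrans algebra_simps)
  then show ?case using step2 kgroup.kg_tinv by metis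
qed

lemma gelF_kgroup: "gel a b k m False \<in> kgroup a b"
proof (induction k arbitrary: m rule: int_induct[where k=0])
  case base
  then show ?case by (rule gel0_kgroup)
next
  case (step1 i)
  have "gel a b (i+1) m False = kglide a \<circ> (kglide a \<circ> gel a b i m False)"
    by (auto simp: gel_def kglide_def algebra_simps)
  then show ?case using step1 kgroup.kg_s by metis
next
  case (step2 i)
  have "gel a b (i-1) m False = inv (kglide a) \<circ> (inv (kglide a) \<circ> gel a b i m False)"
    by (auto simp: gel_def inv_kglide algebra_simps)
  then show ?case using step2 kgroup.kg_sinv by metis
qed

lemma gel_kgroup: "gel a b k m s \<in> kgroup a b"
proof (cases s)
  case True
  have "gel a b k m True = kglide a \<circ> gel a b k (-m) False"
    by (auto simp: gel_def kglide_def algebra_simps)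
  then show ?thesis using True gelF_kgroup kgroup.kg_s by metis
qed (simp add: gelF_kgroup)

lemma kgroup_eq: "kgroup a b = {gel a b k m s | k m s. True}"
  using kgroup_gel gel_kgroup by blast

lemma korbit_eq: "korbit a b z = {gel a b k m s z | k m s. True}"
  unfolding korbit_def kgroup_eq by blast

lemma in_korbit: "w \<in> korbit a b z \<longleftrightarrow> (\<exists>k m s. w = gel a b k m s z)"
  unfolding korbit_eq by blast

lemma gel_id: "gel a b 0 0 False z = z"
  by (cases z) (simp add: gel_def)

lemma self_in_korbit: "z \<in> korbit a b z"
  using gel_id in_korbit by metis

lemma gel_comp: "\<exists>k'' m'' s''. gel a b k m s (gel a b k' m' s' z) = gel a b k'' m'' s'' z"
proof -
  obtain x y where z: "z = (x, y)" by (cases z)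
  consider "s \<and> s'" | "s \<and> \<not> s'" | "\<not> s \<and> s'" | "\<not> s \<and> \<not> s'" by blast
  then show ?thesis
  proof cases
    case 1
    have "gel a b k m s (gel a b k' m' s' z) = gel a b (k+k'+1) (m-m') False z"
      using 1 by (simp add: z gel_def algebra_simps)
    then show ?thesis by blast
  next
    case 2
    have "gel a b k m s (gel a b k' m' s' z) = gel a b (k+k') (m-m') True z"
      using 2 by (simp add: z gel_def algebra_simps)
    then show ?thesis by blast
  next
    case 3
    have "gel a b k m s (gel a b k' m' s' z) = gel a b (k+k') (m+m') True z"
      using 3 by (simp add: z gel_def algebra_simps)
    then show ?thesis by blast
  next
    case 4
    have "gel a b k m s (gel a b k' m' s' z) = gel a b (k+k') (m+m') False z"
      using 4 by (simp add: z gel_def algebra_simps)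
    then show ?thesis by blast
  qed
qed

lemma gel_inv: "\<exists>k' m' s'. \<forall>z. gel a b k' m' s' (gel a b k m s z) = z \<and> gel a b k m s (gel a b k' m' s' z) = z"
proof (cases s)
  case True
  have "\<forall>z. gel a b (-k-1) m True (gel a b k m s z) = z \<and> gel a b k m s (gel a b (-k-1) m True z) = z"
    using True by (auto simp: gel_def algebra_simps)
  then show ?thesis by blast
next
  case False
  have "\<forall>z. gel a b (-k) (-m) False (gel a b k m s z) = z \<and> gel a b k m s (gel a b (-k) (-m) False z) = z"
    using False by (auto simp: gel_def algebra_simps)
  then show ?thesis by blast
qed

lemma korbit_gel: "korbit a b (gel a b k m s z) = korbit a b z"
proof -
  obtain k' m' s' where inv: "\<And>z. gel a b k' m' s' (gel a b k m s z) = z" using gel_inv by blast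
  show ?thesis
  proof
    show "korbit a b (gel a b k m s z) \<subseteq> korbit a b z"
    proof
      fix w assume "w \<in> korbit a b (gel a b k m s z)"
      then obtain k1 m1 s1 where "w = gel a b k1 m1 s1 (gel a b k m s z)" by (auto simp: in_korbit)
      then show "w \<in> korbit a b z" using gel_comp[of a b k1 m1 s1 k m s z] by (auto simp: in_korbit)
    qed
    show "korbit a b z \<subseteq> korbit a b (gel a b k m s z)"
    proof
      fix w assume "w \<in> korbit a b z"
      then obtain k1 m1 s1 where "w = gel a b k1 m1 s1 z" by (auto simp: in_korbit)
      hence "w = gel a b k1 m1 s1 (gel a b k' m' s' (gel a b k m s z))" by (simp add: inv)
      then show "w \<in> korbit a b (gel a b k m s z)" using gel_comp[of a b k1 m1 s1 k' m' s' "gel a b k m s z"]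
        by (auto simp: in_korbit)
    qed
  qed
qed

lemma korbit_mem_eq: "w \<in> korbit a b z \<Longrightarrow> korbit a b w = korbit a b z"
  using korbit_gel in_korbit by metis

lemma korbit_eq_iff: "korbit a b w = korbit a b z \<longleftrightarrow> w \<in> korbit a b z"
  using korbit_mem_eq self_in_korbit by metis

lemma dist_gel: "dist (gel a b k m s u) (gel a b k m s v) = dist u v"
  by (cases u; cases v) (auto simp: gel_def dist_Pair_Pair dist_real_def abs_minus_commute)

lemma gel_affine: "gel a b k m s (u + t *\<^sub>R (v - u)) = gel a b k m s u + t *\<^sub>R (gel a b k m s v - gel a b k m s u)"
  by (cases u; cases v) (auto simp: gel_def algebra_simps)

lemma kdist_set: "{dist u v | u v. u \<in> korbit a b z \<and> v \<in> korbit a b w} = {dist u w | u. u \<in> korbit a b z}"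
proof (intro set_eqI iffI)
  fix r assume "r \<in> {dist u v | u v. u \<in> korbit a b z \<and> v \<in> korbit a b w}"
  then obtain u v where uv: "u \<in> korbit a b z" "v \<in> korbit a b w" "r = dist u v" by blast
  then obtain k m s where v: "v = gel a b k m s w" by (auto simp: in_korbit)
  obtain k' m' s' where inv: "\<And>z. gel a b k' m' s' (gel a b k m s z) = z" using gel_inv by blast
  have "r = dist (gel a b k' m' s' u) w" using uv(3) v dist_gel[of a b k' m' s' u v] inv by simp
  moreover have "gel a b k' m' s' u \<in> korbit a b z"
  proof -
    have "korbit a b (gel a b k' m' s' u) = korbit a b z" using korbit_gel korbit_mem_eq[OF uv(1)] by simp
    then show ?thesis using self_in_korbit by (metis)
  qed
  ultimately show "r \<in> {dist u w | u. u \<in> korbit a b z}" by blast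
next
  fix r assume "r \<in> {dist u w | u. u \<in> korbit a b z}"
  then show "r \<in> {dist u v | u v. u \<in> korbit a b z \<and> v \<in> korbit a b w}"
    using self_in_korbit by blast
qed

lemma kdist_orbit: "kdist (korbit a b z) (korbit a b w) = Inf {dist u w | u. u \<in> korbit a b z}"
  unfolding kdist_def kdist_set ..

lemma kdist_le: "u \<in> korbit a b z \<Longrightarrow> kdist (korbit a b z) (korbit a b w) \<le> dist u w"
proof -
  assume u: "u \<in> korbit a b z"
  have m: "dist u w \<in> {dist u w | u. u \<in> korbit a b z}" using u by blast
  have "bdd_below {dist u w | u. u \<in> korbit a b z}" by (rule bdd_belowI[where m=0]) auto
  then show ?thesis unfolding kdist_orbit using m by (simp add: cInf_lower)
qed

lemma kdist_ge: "(\<And>u. u \<in> korbit a b z \<Longrightarrow> M \<le> dist u w) \<Longrightarrow> M \<le> kdist (korbit a b z) (korbit a b w)"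
proof -
  assume h: "\<And>u. u \<in> korbit a b z \<Longrightarrow> M \<le> dist u w"
  have ne: "{dist u w | u. u \<in> korbit a b z} \<noteq> {}" using self_in_korbit by blast
  show ?thesis unfolding kdist_orbit by (rule cInf_greatest[OF ne]) (use h in blast)
qed

lemma kdist_nonneg: "0 \<le> kdist (korbit a b z) (korbit a b w)"
  by (rule kdist_ge) simp

lemma klein_korbit: "Q \<in> klein a b \<Longrightarrow> c \<in> Q \<Longrightarrow> Q = korbit a b c"
proof -
  assume "Q \<in> klein a b" "c \<in> Q"
  then obtain p where "Q = korbit a b p" "c \<in> korbit a b p" unfolding klein_def by blast
  then show ?thesis using korbit_mem_eq by metis
qed

lemma korbit_in_klein: "korbit a b c \<in> klein a b"
  unfolding klein_def by simp

lemma int_real_cases: "of_int k \<ge> (0::real) \<or> of_int k \<le> (-1::real)"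
proof -
  have "k \<ge> 0 \<or> k \<le> -1" by linarith
  then show ?thesis by auto
qed

lemma int_real_cases0: "of_int k = (0::real) \<or> of_int k \<ge> (1::real) \<or> of_int k \<le> (-1::real)"
proof -
  have "k = 0 \<or> k \<ge> 1 \<or> k \<le> -1" by linarith
  then show ?thesis by auto
qed

lemma abs_mult_ge1: "(a::real) > 0 \<Longrightarrow> x \<ge> 1 \<or> x \<le> -1 \<Longrightarrow> \<bar>x * a\<bar> \<ge> a"
proof -
  assume a: "a > 0" and x: "x \<ge> 1 \<or> x \<le> -1"
  from x show ?thesis
  proof
    assume "x \<ge> 1" then have "x * a \<ge> 1 * a" using a by (intro mult_right_mono) auto
    then show ?thesis by simp
  next
    assume "x \<le> -1" then have "x * a \<le> (-1) * a" using a by (intro mult_right_mono) auto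
    then show ?thesis by simp
  qed
qed

lemma displacement:
  assumes "a > 0" "b > 0" "p' = gel a b k m s p" "dist p p' < min a b"
  shows "p' = p"
proof -
  obtain x y where p: "p = (x, y)" by (cases p)
  have dx: "\<bar>fst p' - fst p\<bar> \<le> dist p p'"
    by (metis dist_commute dist_fst_le dist_real_def)
  have dy: "\<bar>snd p' - snd p\<bar> \<le> dist p p'"
    by (metis dist_commute dist_snd_le dist_real_def)
  show ?thesis
  proof (cases s)
    case True
    then have e: "fst p' - fst p = (2 * of_int k + 1) * a" using assms(3) by (simp add: p gel_def)
    have "\<bar>(2 * of_int k + 1) * a\<bar> \<ge> a"
      using int_real_cases[of k] assms(1) by (intro abs_mult_ge1) auto
    then show ?thesis using e dx assms(4) by linarith
  next
    case False
    then have e: "fst p' - fst p = 2 * of_int k * a" "snd p' - snd p = of_int m * b"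
      using assms(3) by (simp_all add: p gel_def)
    show ?thesis
    proof (cases "k = 0 \<and> m = 0")
      case True then show ?thesis using assms(3) False by (simp add: p gel_def)
    next
      case nz: False
      then show ?thesis
      proof (cases "k = 0")
        case False
        then have "of_int k \<ge> (1::real) \<or> of_int k \<le> (-1::real)" using int_real_cases0[of k] by simp
        then have "\<bar>(2 * of_int k) * a\<bar> \<ge> a" using assms(1)
          by (intro abs_mult_ge1) auto
        then show ?thesis using e dx assms(4) by linarith
      next
        case True
        then have "m \<noteq> 0" using nz by simp
        then have "of_int m \<ge> (1::real) \<or> of_int m \<le> (-1::real)" using int_real_cases0[of m] by simp
        then have "\<bar>of_int m * b\<bar> \<ge> b" using assms(2)
          by (intro abs_mult_ge1) auto
        then show ?thesis using e dy assms(4) by linarith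
      qed
    qed
  qed
qed

definition kcurve :: "real \<Rightarrow> real \<Rightarrow> real \<times> real \<Rightarrow> real \<times> real \<Rightarrow> real \<Rightarrow> (real \<times> real) set" where
  "kcurve a b u v = (\<lambda>t\<in>{0..1}. korbit a b (u + t *\<^sub>R (v - u)))"

lemma ksegments_alt: "ksegments a b P Q = {kcurve a b u v | u v. u \<in> P \<and> v \<in> Q \<and> dist u v = kdist P Q}"
  unfolding ksegments_def kcurve_def ..

lemma card_ksegments:
  assumes ab: "a > 0" "b > 0" and P: "P \<in> klein a b" and Q: "Q \<in> klein a b" and c: "c \<in> Q"
  shows "card (ksegments a b P Q) = card {u \<in> P. dist u c = kdist P Q}"
proof -
  define d where "d = kdist P Q"
  define S where "S = {u \<in> P. dist u c = d}"
  have Qc: "Q = korbit a b c" using klein_korbit Q c by blast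
  have eq: "ksegments a b P Q = (\<lambda>u. kcurve a b u c) ` S"
  proof (intro set_eqI iffI)
    fix \<gamma> assume "\<gamma> \<in> ksegments a b P Q"
    then obtain u v where uv: "\<gamma> = kcurve a b u v" "u \<in> P" "v \<in> Q" "dist u v = d"
      unfolding ksegments_alt d_def by blast
    then obtain k m s where v: "v = gel a b k m s c" using Qc by (auto simp: in_korbit)
    obtain k' m' s' where inv: "\<And>z. gel a b k' m' s' (gel a b k m s z) = z" using gel_inv by blast
    define u' where "u' = gel a b k' m' s' u"
    have u'P: "u' \<in> P"
    proof -
      obtain p0 where P0: "P = korbit a b p0" using P unfolding klein_def by blast
      then have "korbit a b u' = P" using uv(2) korbit_gel korbit_mem_eq u'_def P0 by simp
      then show ?thesis using self_in_korbit by metis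
    qed
    have du': "dist u' c = d" using uv(4) v inv dist_gel[of a b k' m' s' u v] u'_def by simp
    have "kcurve a b u v = kcurve a b u' c"
      unfolding kcurve_def
    proof (rule restrict_ext)
      fix t :: real
      have "korbit a b (u + t *\<^sub>R (v - u)) = korbit a b (gel a b k' m' s' (u + t *\<^sub>R (v - u)))"
        by (simp add: korbit_gel)
      also have "\<dots> = korbit a b (u' + t *\<^sub>R (c - u'))"
        by (simp add: gel_affine u'_def v inv)
      finally show "korbit a b (u + t *\<^sub>R (v - u)) = korbit a b (u' + t *\<^sub>R (c - u'))" .
    qed
    then show "\<gamma> \<in> (\<lambda>u. kcurve a b u c) ` S" using uv(1) u'P du' S_def by blast
  next
    fix \<gamma> assume "\<gamma> \<in> (\<lambda>u. kcurve a b u c) ` S"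
    then show "\<gamma> \<in> ksegments a b P Q" unfolding ksegments_alt S_def d_def using c by blast
  qed
  have inj: "inj_on (\<lambda>u. kcurve a b u c) S"
  proof (rule inj_onI)
    fix u u' assume u: "u \<in> S" and u': "u' \<in> S" and ceq: "kcurve a b u c = kcurve a b u' c"
    have d0: "d \<ge> 0" using u S_def by auto
    define s0 where "s0 = min 1 (min a b / (4 * d + 4))"
    have s0pos: "s0 > 0" using ab d0 by (simp add: s0_def)
    have s01: "s0 \<le> 1" by (simp add: s0_def)
    have s0d: "2 * s0 * d < min a b"
    proof -
      have "s0 \<le> min a b / (4 * d + 4)" by (simp add: s0_def)
      then have "s0 * (4 * d + 4) \<le> min a b" using d0 by (simp add: pos_le_divide_eq)
      then have "s0 * (4 * d) \<le> min a b - 4 * s0" by (simp add: algebra_simps)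
      then show ?thesis using s0pos d0 mult_nonneg_nonneg[of s0 d] by linarith
    qed
    define t where "t = 1 - s0"
    have t01: "t \<in> {0..1}" using s0pos s01 by (simp add: t_def)
    have "korbit a b (u + t *\<^sub>R (c - u)) = korbit a b (u' + t *\<^sub>R (c - u'))"
      using fun_cong[OF ceq, of t] t01 by (simp add: kcurve_def)
    then have "u' + t *\<^sub>R (c - u') \<in> korbit a b (u + t *\<^sub>R (c - u))"
      by (metis korbit_eq_iff)
    then obtain k m s where g: "u' + t *\<^sub>R (c - u') = gel a b k m s (u + t *\<^sub>R (c - u))"
      by (auto simp: in_korbit)
    have diff: "(u + t *\<^sub>R (c - u)) - (u' + t *\<^sub>R (c - u')) = s0 *\<^sub>R (u - u')"
      by (simp add: t_def algebra_simps)
    have "dist u u' \<le> dist u c + dist u' c" by (simp add: dist_triangle2)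
    also have "\<dots> = 2 * d" using u u' S_def by simp
    finally have duu: "dist u u' \<le> 2 * d" .
    have "dist (u + t *\<^sub>R (c - u)) (u' + t *\<^sub>R (c - u')) = s0 * dist u u'"
    proof -
      have "dist (u + t *\<^sub>R (c - u)) (u' + t *\<^sub>R (c - u')) = norm (s0 *\<^sub>R (u - u'))"
        by (simp only: dist_norm diff)
      also have "\<dots> = s0 * norm (u - u')" using s0pos by simp
      finally show ?thesis by (simp add: dist_norm)
    qed
    also have "\<dots> \<le> s0 * (2 * d)" using duu s0pos by simp
    also have "\<dots> < min a b" using s0d by simp
    finally have "u' + t *\<^sub>R (c - u') = u + t *\<^sub>R (c - u)"
      using displacement[OF ab g] by simp
    then have "s0 *\<^sub>R (u - u') = 0" using diff by simp
    then show "u = u'" using s0pos by simp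
  qed
  show ?thesis using eq card_image[OF inj] S_def d_def by simp
qed

definition good :: "real \<Rightarrow> real \<Rightarrow> (real \<times> real \<Rightarrow> real \<times> real) \<Rightarrow> (real \<times> real \<Rightarrow> real \<times> real) \<Rightarrow> bool" where
  "good a b \<phi> \<psi> \<longleftrightarrow> (\<forall>x. \<psi> (\<phi> x) = x) \<and> (\<forall>x. \<phi> (\<psi> x) = x) \<and> (\<forall>u v. dist (\<phi> u) (\<phi> v) = dist u v)
     \<and> (\<forall>w. \<phi> ` korbit a b w = korbit a b (\<phi> w)) \<and> (\<forall>w. \<psi> ` korbit a b w = korbit a b (\<psi> w))
     \<and> (\<forall>Q \<in> kmain a b. \<phi> ` Q \<in> kmain a b) \<and> (\<forall>Q \<in> kmain a b. \<psi> ` Q \<in> kmain a b)"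

lemma goodD:
  assumes "good a b \<phi> \<psi>"
  shows "\<psi> (\<phi> x) = x" "\<phi> (\<psi> x) = x" "dist (\<phi> u) (\<phi> v) = dist u v"
    "\<phi> ` korbit a b w = korbit a b (\<phi> w)" "\<psi> ` korbit a b w = korbit a b (\<psi> w)"
    "Q \<in> kmain a b \<Longrightarrow> \<phi> ` Q \<in> kmain a b" "Q \<in> kmain a b \<Longrightarrow> \<psi> ` Q \<in> kmain a b"
  using assms unfolding good_def by blast+

lemma good_sym: "good a b \<phi> \<psi> \<Longrightarrow> good a b \<psi> \<phi>"
proof -
  assume g: "good a b \<phi> \<psi>"
  have d: "dist (\<psi> u) (\<psi> v) = dist u v" for u v
  proof -
    have "dist (\<psi> u) (\<psi> v) = dist (\<phi> (\<psi> u)) (\<phi> (\<psi> v))" using goodD(3)[OF g] by metis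
    also have "\<dots> = dist u v" using goodD(2)[OF g] by metis
    finally show ?thesis .
  qed
  show ?thesis unfolding good_def
    using d goodD[OF g] by blast
qed

lemma good_img_img: "good a b \<phi> \<psi> \<Longrightarrow> \<phi> ` (\<psi> ` Q) = Q"
proof -
  assume g: "good a b \<phi> \<psi>"
  have "\<And>x. \<phi> (\<psi> x) = x" using goodD(2)[OF g] .
  then show ?thesis by (simp add: image_image)
qed

lemma good_inj: "good a b \<phi> \<psi> \<Longrightarrow> inj \<phi>"
proof -
  assume g: "good a b \<phi> \<psi>"
  have "\<And>x. \<psi> (\<phi> x) = x" using goodD(1)[OF g] .
  then show ?thesis by (metis injI)
qed

lemma good_klein: "good a b \<phi> \<psi> \<Longrightarrow> Q \<in> klein a b \<Longrightarrow> \<phi> ` Q \<in> klein a b"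
  unfolding klein_def using goodD(4) by blast

lemma good_kdist: "good a b \<phi> \<psi> \<Longrightarrow> kdist (\<phi> ` P) (\<phi> ` Q) = kdist P Q"
proof -
  assume g: "good a b \<phi> \<psi>"
  have d: "dist (\<phi> u) (\<phi> v) = dist u v" for u v using goodD(3)[OF g] by blast
  have "{dist u v | u v. u \<in> \<phi> ` P \<and> v \<in> \<phi> ` Q} = {dist u v | u v. u \<in> P \<and> v \<in> Q}"
  proof (intro set_eqI iffI)
    fix r assume "r \<in> {dist u v | u v. u \<in> \<phi> ` P \<and> v \<in> \<phi> ` Q}"
    then obtain u' v' where uv: "r = dist u' v'" "u' \<in> \<phi> ` P" "v' \<in> \<phi> ` Q" by blast
    obtain u where u: "u \<in> P" "u' = \<phi> u" using uv(2) by blast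
    obtain v where v: "v \<in> Q" "v' = \<phi> v" using uv(3) by blast
    have "r = dist u v" using uv(1) u(2) v(2) d by simp
    then show "r \<in> {dist u v | u v. u \<in> P \<and> v \<in> Q}" using u(1) v(1) by blast
  next
    fix r assume "r \<in> {dist u v | u v. u \<in> P \<and> v \<in> Q}"
    then obtain u v where uv: "u \<in> P" "v \<in> Q" "r = dist u v" by blast
    have "r = dist (\<phi> u) (\<phi> v)" using uv(3) d by simp
    moreover have "\<phi> u \<in> \<phi> ` P" "\<phi> v \<in> \<phi> ` Q" using uv by auto
    ultimately show "r \<in> {dist u v | u v. u \<in> \<phi> ` P \<and> v \<in> \<phi> ` Q}" by blast
  qed
  then show ?thesis unfolding kdist_def by simp
qed

lemma good_kfar: "good a b \<phi> \<psi> \<Longrightarrow> kfar a b (\<phi> ` P) = (\<lambda>Q. \<phi> ` Q) ` kfar a b P"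
proof -
  assume g: "good a b \<phi> \<psi>"
  have g': "good a b \<psi> \<phi>" using g good_sym by blast
  show ?thesis
  proof (intro set_eqI iffI)
    fix Q' assume Q': "Q' \<in> kfar a b (\<phi> ` P)"
    define Q where "Q = \<psi> ` Q'"
    have QQ: "Q' = \<phi> ` Q" using g Q_def good_img_img by metis
    have "Q \<in> klein a b" using Q' g' good_klein Q_def unfolding kfar_def by blast
    moreover have "\<forall>Q''\<in>klein a b. kdist P Q'' \<le> kdist P Q"
    proof
      fix Q'' assume "Q'' \<in> klein a b"
      then have "kdist (\<phi> ` P) (\<phi> ` Q'') \<le> kdist (\<phi> ` P) Q'" using Q' g good_klein unfolding kfar_def by blast
      then show "kdist P Q'' \<le> kdist P Q" using QQ good_kdist[OF g] by simp
    qed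
    ultimately have "Q \<in> kfar a b P" unfolding kfar_def by blast
    then show "Q' \<in> (\<lambda>Q. \<phi> ` Q) ` kfar a b P" using QQ by blast
  next
    fix Q' assume "Q' \<in> (\<lambda>Q. \<phi> ` Q) ` kfar a b P"
    then obtain Q where Q: "Q \<in> kfar a b P" "Q' = \<phi> ` Q" by blast
    have "Q' \<in> klein a b" using Q g good_klein unfolding kfar_def by blast
    moreover have "\<forall>Q''\<in>klein a b. kdist (\<phi> ` P) Q'' \<le> kdist (\<phi> ` P) Q'"
    proof
      fix Q'' assume Q'': "Q'' \<in> klein a b"
      have "\<psi> ` Q'' \<in> klein a b" using Q'' g' good_klein by blast
      then have "kdist P (\<psi> ` Q'') \<le> kdist P Q" using Q unfolding kfar_def by blast
      moreover have "Q'' = \<phi> ` (\<psi> ` Q'')" using g good_img_img by metis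
      ultimately show "kdist (\<phi> ` P) Q'' \<le> kdist (\<phi> ` P) Q'" using Q(2) good_kdist[OF g] by metis
    qed
    ultimately show "Q' \<in> kfar a b (\<phi> ` P)" unfolding kfar_def by blast
  qed
qed

lemma inj_img: "inj \<phi> \<Longrightarrow> inj_on (\<lambda>Q. \<phi> ` Q) X"
  by (meson inj_image_eq_iff inj_onI)

lemma good_card_kfar: "good a b \<phi> \<psi> \<Longrightarrow> card (kfar a b (\<phi> ` P)) = card (kfar a b P)"
  using good_kfar[of a b \<phi> \<psi> P] card_image[OF inj_img[OF good_inj]] by metis

lemma good_card_seg:
  assumes ab: "a > 0" "b > 0" and g: "good a b \<phi> \<psi>" and P: "P \<in> klein a b" and Q: "Q \<in> klein a b"
  shows "card (ksegments a b (\<phi> ` P) (\<phi> ` Q)) = card (ksegments a b P Q)"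
proof -
  obtain c where c: "Q = korbit a b c" using Q unfolding klein_def by blast
  have cQ: "c \<in> Q" using c self_in_korbit by metis
  have "card (ksegments a b (\<phi> ` P) (\<phi> ` Q)) = card {u \<in> \<phi> ` P. dist u (\<phi> c) = kdist (\<phi> ` P) (\<phi> ` Q)}"
    by (rule card_ksegments[OF ab good_klein[OF g P] good_klein[OF g Q] imageI[OF cQ]])
  also have "{u \<in> \<phi> ` P. dist u (\<phi> c) = kdist (\<phi> ` P) (\<phi> ` Q)} = \<phi> ` {u \<in> P. dist u c = kdist P Q}"
  proof (intro set_eqI iffI)
    fix u assume "u \<in> {u \<in> \<phi> ` P. dist u (\<phi> c) = kdist (\<phi> ` P) (\<phi> ` Q)}"
    then obtain u0 where "u0 \<in> P" "u = \<phi> u0" "dist (\<phi> u0) (\<phi> c) = kdist (\<phi> ` P) (\<phi> ` Q)" by blast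
    moreover have "dist u0 c = kdist P Q" using \<open>dist (\<phi> u0) (\<phi> c) = kdist (\<phi> ` P) (\<phi> ` Q)\<close>
      goodD(3)[OF g] good_kdist[OF g] by simp
    ultimately show "u \<in> \<phi> ` {u \<in> P. dist u c = kdist P Q}" by blast
  next
    fix u assume "u \<in> \<phi> ` {u \<in> P. dist u c = kdist P Q}"
    then obtain u0 where "u0 \<in> P" "u = \<phi> u0" "dist u0 c = kdist P Q" by blast
    moreover have "dist (\<phi> u0) (\<phi> c) = kdist (\<phi> ` P) (\<phi> ` Q)" using \<open>dist u0 c = kdist P Q\<close>
      goodD(3)[OF g] good_kdist[OF g] by simp
    ultimately show "u \<in> {u \<in> \<phi> ` P. dist u (\<phi> c) = kdist (\<phi> ` P) (\<phi> ` Q)}" by blast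
  qed
  also have "card \<dots> = card {u \<in> P. dist u c = kdist P Q}"
    by (rule card_image[OF inj_on_subset[OF good_inj[OF g] subset_UNIV]])
  also have "\<dots> = card (ksegments a b P Q)"
    using card_ksegments[OF ab P Q cQ] by simp
  finally show ?thesis .
qed

lemma good_card_kfarn:
  assumes ab: "a > 0" "b > 0" and g: "good a b \<phi> \<psi>" and P: "P \<in> klein a b"
  shows "card (kfarn a b n (\<phi> ` P)) = card (kfarn a b n P)"
proof -
  have "kfarn a b n (\<phi> ` P) = (\<lambda>Q. \<phi> ` Q) ` kfarn a b n P"
    unfolding kfarn_def good_kfar[OF g]
    using good_card_seg[OF ab g P] unfolding kfar_def by auto
  then show ?thesis using card_image[OF inj_img[OF good_inj[OF g]]] by metis
qed

lemma good_kdist_main: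
  assumes g: "good a b \<phi> \<psi>"
  shows "kdist_main a b (\<phi> ` P) = kdist_main a b P"
proof -
  have g': "good a b \<psi> \<phi>" using g good_sym by blast
  have "{kdist (\<phi> ` P) Q | Q. Q \<in> kmain a b} = {kdist P Q | Q. Q \<in> kmain a b}"
  proof (intro set_eqI iffI)
    fix r assume "r \<in> {kdist (\<phi> ` P) Q | Q. Q \<in> kmain a b}"
    then obtain Q where Q: "Q \<in> kmain a b" "r = kdist (\<phi> ` P) Q" by blast
    have "Q = \<phi> ` (\<psi> ` Q)" using g good_img_img by metis
    then have "r = kdist P (\<psi> ` Q)" using Q good_kdist[OF g] by metis
    moreover have "\<psi> ` Q \<in> kmain a b" using goodD(7)[OF g] Q by blast
    ultimately show "r \<in> {kdist P Q | Q. Q \<in> kmain a b}" by blast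
  next
    fix r assume "r \<in> {kdist P Q | Q. Q \<in> kmain a b}"
    then obtain Q where Q: "Q \<in> kmain a b" "r = kdist P Q" by blast
    have "r = kdist (\<phi> ` P) (\<phi> ` Q)" using Q good_kdist[OF g] by metis
    moreover have "\<phi> ` Q \<in> kmain a b" using goodD(6)[OF g] Q by blast
    ultimately show "r \<in> {kdist (\<phi> ` P) Q | Q. Q \<in> kmain a b}" by blast
  qed
  then show ?thesis unfolding kdist_main_def by simp
qed

definition hshift :: "real \<Rightarrow> real \<times> real \<Rightarrow> real \<times> real" where
  "hshift t = (\<lambda>(x, y). (x + t, y))"

definition vrefl :: "real \<Rightarrow> real \<times> real \<Rightarrow> real \<times> real" where
  "vrefl b = (\<lambda>(x, y). (x, b / 2 - y))"

lemma gel_in_korbit: "gel a b k m s w \<in> korbit a b w"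
  unfolding in_korbit by blast

lemma hshift_korbit: "hshift t ` korbit a b w = korbit a b (hshift t w)"
proof -
  have h: "hshift t (gel a b k m s w) = gel a b k m s (hshift t w)" for k m s
    by (cases w) (auto simp: hshift_def gel_def algebra_simps)
  show ?thesis
  proof (intro set_eqI iffI)
    fix p assume "p \<in> hshift t ` korbit a b w"
    then obtain k m s where "p = hshift t (gel a b k m s w)" by (auto simp: in_korbit)
    then show "p \<in> korbit a b (hshift t w)" using h gel_in_korbit by metis
  next
    fix p assume "p \<in> korbit a b (hshift t w)"
    then obtain k m s where "p = gel a b k m s (hshift t w)" by (auto simp: in_korbit)
    then have "p = hshift t (gel a b k m s w)" using h by metis
    then show "p \<in> hshift t ` korbit a b w" using gel_in_korbit by blast
  qed
qed

lemma vrefl_korbit_sub: "vrefl b ` korbit a b w \<subseteq> korbit a b (vrefl b w)"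
proof -
  have "\<exists>m'. vrefl b (gel a b k m s w) = gel a b k m' s (vrefl b w)" for k m s
  proof (cases s)
    case True
    have "vrefl b (gel a b k m s w) = gel a b k (1 - m) s (vrefl b w)"
      using True by (cases w) (auto simp: vrefl_def gel_def algebra_simps)
    then show ?thesis by blast
  next
    case False
    have "vrefl b (gel a b k m s w) = gel a b k (- m) s (vrefl b w)"
      using False by (cases w) (auto simp: vrefl_def gel_def algebra_simps)
    then show ?thesis by blast
  qed
  then show ?thesis
  proof -
    assume h: "\<And>k m s. \<exists>m'. vrefl b (gel a b k m s w) = gel a b k m' s (vrefl b w)"
    show ?thesis
    proof
      fix p assume "p \<in> vrefl b ` korbit a b w"
      then obtain k m s where "p = vrefl b (gel a b k m s w)" by (auto simp: in_korbit)
      then show "p \<in> korbit a b (vrefl b w)" using h gel_in_korbit by metis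
    qed
  qed
qed

lemma vrefl_vrefl: "vrefl b (vrefl b x) = x"
  by (cases x) (simp add: vrefl_def)

lemma vrefl_korbit: "vrefl b ` korbit a b w = korbit a b (vrefl b w)"
proof
  show "vrefl b ` korbit a b w \<subseteq> korbit a b (vrefl b w)" by (rule vrefl_korbit_sub)
  have "vrefl b ` korbit a b (vrefl b w) \<subseteq> korbit a b w"
    using vrefl_korbit_sub[of b a "vrefl b w"] by (simp add: vrefl_vrefl)
  then have "vrefl b ` vrefl b ` korbit a b (vrefl b w) \<subseteq> vrefl b ` korbit a b w" by blast
  then show "korbit a b (vrefl b w) \<subseteq> vrefl b ` korbit a b w" by (simp add: image_image vrefl_vrefl)
qed

lemma hshift_kmain: "Q \<in> kmain a b \<Longrightarrow> hshift t ` Q \<in> kmain a b"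
proof -
  assume "Q \<in> kmain a b"
  then obtain x n where Q: "Q = korbit a b (x, of_int n * b / 2)" unfolding kmain_def by blast
  have "hshift t ` Q = korbit a b (x + t, of_int n * b / 2)"
    using hshift_korbit Q by (simp add: hshift_def)
  then show ?thesis unfolding kmain_def by blast
qed

lemma vrefl_kmain: "Q \<in> kmain a b \<Longrightarrow> vrefl b ` Q \<in> kmain a b"
proof -
  assume "Q \<in> kmain a b"
  then obtain x n where Q: "Q = korbit a b (x, of_int n * b / 2)" unfolding kmain_def by blast
  have "vrefl b ` Q = korbit a b (x, of_int (1 - n) * b / 2)"
    using vrefl_korbit Q by (simp add: vrefl_def algebra_simps diff_divide_distrib)
  then show ?thesis unfolding kmain_def by blast
qed

lemma good_hshift: "good a b (hshift t) (hshift (-t))"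
proof -
  have 1: "hshift (-t) (hshift t x) = x" "hshift t (hshift (-t) x) = x" for x
    by (cases x; simp add: hshift_def)+
  have 2: "dist (hshift t u) (hshift t v) = dist u v" for u v
    by (cases u; cases v) (simp add: hshift_def dist_Pair_Pair)
  show ?thesis unfolding good_def using 1 2 hshift_korbit hshift_kmain by blast
qed

lemma good_vrefl: "good a b (vrefl b) (vrefl b)"
proof -
  have 2: "dist (vrefl b u) (vrefl b v) = dist u v" for u v
    by (cases u; cases v) (simp add: vrefl_def dist_Pair_Pair dist_real_def abs_minus_commute)
  show ?thesis unfolding good_def using 2 vrefl_korbit vrefl_kmain vrefl_vrefl by blast
qed

definition inveq :: "real \<Rightarrow> real \<Rightarrow> (real \<times> real) set \<Rightarrow> (real \<times> real) set \<Rightarrow> bool" where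
  "inveq a b P P' \<longleftrightarrow> kdist_main a b P = kdist_main a b P' \<and> card (kfar a b P) = card (kfar a b P')
     \<and> (\<forall>n. card (kfarn a b n P) = card (kfarn a b n P'))"

lemma inveq_trans: "inveq a b P P' \<Longrightarrow> inveq a b P' P'' \<Longrightarrow> inveq a b P P''"
  unfolding inveq_def by simp

lemma inveq_sym: "inveq a b P P' \<Longrightarrow> inveq a b P' P"
  unfolding inveq_def by simp

lemma inveq_good: "a > 0 \<Longrightarrow> b > 0 \<Longrightarrow> good a b \<phi> \<psi> \<Longrightarrow> P \<in> klein a b \<Longrightarrow> inveq a b (\<phi> ` P) P"
proof -
  assume ab: "a > 0" "b > 0" and g: "good a b \<phi> \<psi>" and P: "P \<in> klein a b"
  show ?thesis unfolding inveq_def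
    using good_kdist_main[OF g] good_card_kfar[OF g] good_card_kfarn[OF ab g P] by simp
qed

lemma inveq_refl: "inveq a b P P"
  unfolding inveq_def by simp

lemma normalize:
  assumes ab: "a > 0" "b > 0" and P: "P \<in> klein a b"
  shows "\<exists>y0. 0 \<le> y0 \<and> y0 \<le> b/4 \<and> inveq a b P (korbit a b (0, y0))"
proof -
  obtain x0 y where Pxy: "P = korbit a b (x0, y)" using P unfolding klein_def by auto
  have s1: "inveq a b P (korbit a b (0, y))"
  proof -
    have "hshift (-x0) (x0, y) = (0, y)" by (simp add: hshift_def)
    then have "hshift (-x0) ` P = korbit a b (0, y)" using hshift_korbit[of "-x0" a b "(x0, y)"] Pxy by simp
    moreover have "inveq a b (hshift (-x0) ` P) P" by (rule inveq_good[OF ab good_hshift P])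
    ultimately show ?thesis using inveq_sym by simp
  qed
  define n where "n = \<lfloor>y / b\<rfloor>"
  define y' where "y' = y - of_int n * b"
  have y'0: "0 \<le> y'" using floor_divide_lower[OF ab(2), of y] by (simp add: y'_def n_def)
  have y'1: "y' < b" using floor_divide_upper[OF ab(2), of y] by (simp add: y'_def n_def algebra_simps)
  have "(0, y') = gel a b 0 (-n) False (0, y)" by (simp add: gel_def y'_def)
  then have "korbit a b (0, y) = korbit a b (0, y')" using korbit_gel[of a b 0 "-n" False "(0, y)"] by simp
  then have s2: "inveq a b P (korbit a b (0, y'))" using s1 by simp
  have kl: "korbit a b c \<in> klein a b" for c by (rule korbit_in_klein)
  have flip: "inveq a b (korbit a b (0, - t)) (korbit a b (0, t))" for t
  proof -
    have "(a, t) = gel a b 0 0 True (0, -t)" by (simp add: gel_def)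
    then have "korbit a b (0, -t) = korbit a b (a, t)" using korbit_gel[of a b 0 0 True "(0, -t)"] by simp
    moreover have "hshift (-a) (a, t) = (0, t)" by (simp add: hshift_def)
    then have "hshift (-a) ` korbit a b (a, t) = korbit a b (0, t)" using hshift_korbit[of "-a" a b "(a, t)"] by simp
    moreover have "inveq a b (hshift (-a) ` korbit a b (a, t)) (korbit a b (a, t))"
      by (rule inveq_good[OF ab good_hshift kl])
    ultimately show ?thesis using inveq_sym by simp
  qed
  have refl: "inveq a b (korbit a b (0, t)) (korbit a b (0, b/2 - t))" for t
  proof -
    have "vrefl b (0, t) = (0, b/2 - t)" by (simp add: vrefl_def)
    then have "vrefl b ` korbit a b (0, t) = korbit a b (0, b/2 - t)" using vrefl_korbit[of b a "(0, t)"] by simp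
    moreover have "inveq a b (vrefl b ` korbit a b (0, t)) (korbit a b (0, t))"
      by (rule inveq_good[OF ab good_vrefl kl])
    ultimately show ?thesis using inveq_sym by simp
  qed
  consider "y' \<le> b/4" | "b/4 < y' \<and> y' \<le> b/2" | "b/2 < y' \<and> y' \<le> 3*b/4" | "3*b/4 < y'" by linarith
  then show ?thesis
  proof cases
    case 1 then show ?thesis using s2 y'0 by blast
  next
    case 2
    then show ?thesis using inveq_trans[OF s2 refl[of y']] by (intro exI[of _ "b/2 - y'"]) auto
  next
    case 3
    have "inveq a b P (korbit a b (0, - (y' - b/2)))" using inveq_trans[OF s2 refl[of y']] by simp
    then have "inveq a b P (korbit a b (0, y' - b/2))" using flip inveq_trans by blast
    then show ?thesis using 3 by (intro exI[of _ "y' - b/2"]) auto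
  next
    case 4
    have "(0, - (b - y')) = gel a b 0 (-1) False (0, y')" by (simp add: gel_def)
    then have "korbit a b (0, y') = korbit a b (0, - (b - y'))" using korbit_gel[of a b 0 "-1" False "(0, y')"] by simp
    then have "inveq a b P (korbit a b (0, - (b - y')))" using s2 by simp
    then have "inveq a b P (korbit a b (0, b - y'))" using flip inveq_trans by blast
    then show ?thesis using 4 y'1 by (intro exI[of _ "b - y'"]) auto
  qed
qed

lemma assemble_kfar:
  assumes up: "\<And>w. kdist (korbit a b z) (korbit a b w) \<le> M"
    and eq: "\<And>w. kdist (korbit a b z) (korbit a b w) \<ge> M \<Longrightarrow> \<exists>c\<in>C. w \<in> korbit a b c"
    and low: "\<And>c u. c \<in> C \<Longrightarrow> u \<in> korbit a b z \<Longrightarrow> dist u c \<ge> M"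
    and ne: "C \<noteq> {}"
  shows "kfar a b (korbit a b z) = korbit a b ` C"
    and "\<And>c. c \<in> C \<Longrightarrow> kdist (korbit a b z) (korbit a b c) = M"
proof -
  have kc: "kdist (korbit a b z) (korbit a b c) = M" if c: "c \<in> C" for c
  proof -
    have "M \<le> kdist (korbit a b z) (korbit a b c)" by (rule kdist_ge) (rule low[OF c])
    then show ?thesis using up[of c] by simp
  qed
  then show "\<And>c. c \<in> C \<Longrightarrow> kdist (korbit a b z) (korbit a b c) = M" .
  show "kfar a b (korbit a b z) = korbit a b ` C"
  proof (intro set_eqI iffI)
    fix Q assume Q: "Q \<in> kfar a b (korbit a b z)"
    then have Qk: "Q \<in> klein a b" unfolding kfar_def by simp
    then obtain w where w: "Q = korbit a b w" unfolding klein_def by blast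
    obtain c where c: "c \<in> C" using ne by blast
    have "kdist (korbit a b z) (korbit a b c) \<le> kdist (korbit a b z) Q"
      using Q korbit_in_klein unfolding kfar_def by blast
    then have "kdist (korbit a b z) (korbit a b w) \<ge> M" using kc[OF c] w by simp
    then obtain c' where c': "c' \<in> C" "w \<in> korbit a b c'" using eq by blast
    then have "Q = korbit a b c'" using w korbit_mem_eq by simp
    then show "Q \<in> korbit a b ` C" using c' by blast
  next
    fix Q assume "Q \<in> korbit a b ` C"
    then obtain c where c: "c \<in> C" "Q = korbit a b c" by blast
    have "\<forall>Q'\<in>klein a b. kdist (korbit a b z) Q' \<le> kdist (korbit a b z) Q"
    proof
      fix Q' assume "Q' \<in> klein a b"
      then obtain w where "Q' = korbit a b w" unfolding klein_def by blast
      then show "kdist (korbit a b z) Q' \<le> kdist (korbit a b z) Q" using up[of w] kc[OF c(1)] c(2) by simp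
    qed
    then show "Q \<in> kfar a b (korbit a b z)" unfolding kfar_def using c korbit_in_klein by blast
  qed
qed

lemma sq_ge_of_le: "(A::real) \<le> - B \<Longrightarrow> 0 \<le> B \<Longrightarrow> A^2 \<ge> B^2"
proof -
  assume h: "A \<le> - B" "0 \<le> B"
  then have "B^2 \<le> (-A)^2" by (intro power_mono) auto
  then show ?thesis by simp
qed

lemma int_sq_ge:
  fixes p r :: real and k :: int
  assumes p: "p > 0" and r: "0 \<le> r" "r \<le> p/2"
  shows "(of_int k * p - r)^2 \<ge> r^2 \<and> ((of_int k * p - r)^2 = r^2 \<longleftrightarrow> k = 0 \<or> (k = 1 \<and> r = p/2))"
proof -
  consider "k \<le> -1" | "k = 0" | "k = 1" | "k \<ge> 2" by linarith
  then show ?thesis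
  proof cases
    case 1
    then have "of_int k \<le> (-1::real)" by simp
    then have "of_int k * p \<le> (-1) * p" using p by (intro mult_right_mono) auto
    then have "(of_int k * p - r)^2 \<ge> (p + r)^2" using r p by (intro sq_ge_of_le) auto
    moreover have "(p + r)^2 > r^2" using p r by (intro power_strict_mono) auto
    ultimately show ?thesis using 1 by auto
  next
    case 2 then show ?thesis by simp
  next
    case 3
    have "(p - r)^2 - r^2 = p * (p - 2*r)" by (simp add: power2_eq_square algebra_simps)
    moreover have "p * (p - 2*r) \<ge> 0" using p r by simp
    moreover have "p * (p - 2*r) = 0 \<longleftrightarrow> r = p/2" using p by auto
    ultimately show ?thesis using 3 by auto
  next
    case 4
    then have "of_int k \<ge> (2::real)" by simp
    then have "of_int k * p \<ge> 2 * p" using p by (intro mult_right_mono) auto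
    then have "of_int k * p - r \<ge> p + r" using r by linarith
    then have "(of_int k * p - r)^2 \<ge> (p + r)^2" using r p by (intro power_mono) auto
    moreover have "(p + r)^2 > r^2" using p r by (intro power_strict_mono) auto
    ultimately show ?thesis using 4 by auto
  qed
qed

lemma dist_sq: "dist (x1, y1) (x2, y2) = sqrt ((x1 - x2)^2 + (y1 - y2)^2)"
  by (simp add: dist_Pair_Pair dist_real_def)

lemma tri_bound:
  fixes x y ux uy vx vy wx wy ox oy RR :: real
  assumes h1: "(vx-x)*(wy-y) - (vy-y)*(wx-x) \<ge> 0"
    and h2: "(wx-x)*(uy-y) - (wy-y)*(ux-x) \<ge> 0"
    and h3: "(ux-x)*(vy-y) - (uy-y)*(vx-x) \<ge> 0"
    and pos: "((vx-x)*(wy-y) - (vy-y)*(wx-x)) + ((wx-x)*(uy-y) - (wy-y)*(ux-x)) + ((ux-x)*(vy-y) - (uy-y)*(vx-x)) > 0"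
    and c1: "(ux-ox)^2+(uy-oy)^2 = RR" and c2: "(vx-ox)^2+(vy-oy)^2 = RR" and c3: "(wx-ox)^2+(wy-oy)^2 = RR"
  shows "(x-ux)^2+(y-uy)^2 \<le> RR - ((x-ox)^2+(y-oy)^2) \<or> (x-vx)^2+(y-vy)^2 \<le> RR - ((x-ox)^2+(y-oy)^2)
       \<or> (x-wx)^2+(y-wy)^2 \<le> RR - ((x-ox)^2+(y-oy)^2)"
proof (rule ccontr)
  define H1 where "H1 = (vx-x)*(wy-y) - (vy-y)*(wx-x)"
  define H2 where "H2 = (wx-x)*(uy-y) - (wy-y)*(ux-x)"
  define H3 where "H3 = (ux-x)*(vy-y) - (uy-y)*(vx-x)"
  define Q where "Q = (x-ox)^2+(y-oy)^2"
  define d1 where "d1 = (x-ux)^2+(y-uy)^2 - (RR - Q)"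
  define d2 where "d2 = (x-vx)^2+(y-vy)^2 - (RR - Q)"
  define d3 where "d3 = (x-wx)^2+(y-wy)^2 - (RR - Q)"
  assume "\<not> ?thesis"
  then have p: "d1 > 0" "d2 > 0" "d3 > 0" unfolding d1_def d2_def d3_def Q_def by auto
  have e1: "d1 = 2*Q - 2*((x-ox)*(ux-ox)+(y-oy)*(uy-oy))"
    unfolding d1_def Q_def using c1 by (simp add: power2_eq_square algebra_simps)
  have e2: "d2 = 2*Q - 2*((x-ox)*(vx-ox)+(y-oy)*(vy-oy))"
    unfolding d2_def Q_def using c2 by (simp add: power2_eq_square algebra_simps)
  have e3: "d3 = 2*Q - 2*((x-ox)*(wx-ox)+(y-oy)*(wy-oy))"
    unfolding d3_def Q_def using c3 by (simp add: power2_eq_square algebra_simps)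
  have key: "H1*d1 + H2*d2 + H3*d3 = 0"
    unfolding e1 e2 e3 H1_def H2_def H3_def Q_def by (simp add: power2_eq_square algebra_simps)
  have "H1*d1 \<ge> 0" "H2*d2 \<ge> 0" "H3*d3 \<ge> 0" using h1 h2 h3 p unfolding H1_def H2_def H3_def by simp_all
  then have "H1*d1 = 0" "H2*d2 = 0" "H3*d3 = 0" using key by linarith+
  then have "H1 = 0" "H2 = 0" "H3 = 0" using p by simp_all
  then show False using pos unfolding H1_def H2_def H3_def by simp
qed

lemma bound_from_vertex:
  assumes v: "v \<in> korbit a b z" and sq: "(x - fst v)^2 + (y - snd v)^2 \<le> RR - ((x-ox)^2+(y-oy)^2)"
    and R: "RR \<le> M^2" and M: "0 \<le> M"
  shows "kdist (korbit a b z) (korbit a b (x, y)) \<le> M"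
    and "kdist (korbit a b z) (korbit a b (x, y)) \<ge> M \<Longrightarrow> (x, y) = (ox, oy) \<and> RR = M^2"
proof -
  have Q0: "(x-ox)^2+(y-oy)^2 \<ge> 0" by simp
  have dv: "dist v (x, y) = sqrt ((x - fst v)^2 + (y - snd v)^2)"
    by (cases v) (simp add: dist_Pair_Pair dist_real_def power2_commute)
  have kd: "kdist (korbit a b z) (korbit a b (x, y)) \<le> dist v (x, y)" by (rule kdist_le[OF v])
  have "sqrt ((x - fst v)^2 + (y - snd v)^2) \<le> sqrt (M^2)"
    using sq R Q0 by (intro real_sqrt_le_mono) linarith
  then have "dist v (x, y) \<le> M" using dv M by simp
  then show "kdist (korbit a b z) (korbit a b (x, y)) \<le> M" using kd by linarith
  assume ge: "kdist (korbit a b z) (korbit a b (x, y)) \<ge> M"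
  then have "M \<le> sqrt ((x - fst v)^2 + (y - snd v)^2)" using kd dv by linarith
  then have "M^2 \<le> (sqrt ((x - fst v)^2 + (y - snd v)^2))^2"
    using M by (intro power_mono) auto
  then have "M^2 \<le> (x - fst v)^2 + (y - snd v)^2" by simp
  then have "(x-ox)^2+(y-oy)^2 \<le> 0" "M^2 \<le> RR" using sq R Q0 by linarith+
  then have "x - ox = 0 \<and> y - oy = 0" "RR = M^2" using R by (simp_all add: sum_power2_le_zero_iff)
  then show "(x, y) = (ox, oy) \<and> RR = M^2" by simp
qed

lemma nn2: "(0::real) \<le> A \<Longrightarrow> 0 \<le> B \<Longrightarrow> 0 \<le> C \<Longrightarrow> 0 \<le> D \<Longrightarrow> 0 \<le> A*B + C*D"
  by (simp add: add_nonneg_nonneg mult_nonneg_nonneg)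

locale nz =
  fixes a b y0 :: real
  assumes a: "a > 0" and b: "b > 0" and y00: "0 \<le> y0" and y01: "y0 \<le> b/4"
begin

definition "e = a^2 - 2*b*y0 + 4*y0^2"
definition "x1 = e / (2*a)"
definition "MM1 = x1^2 + b^2/4"

abbreviation "Pz \<equiv> korbit a b (0, y0)"

lemma ptA: "(2 * of_int k * a, y0 + of_int m * b) \<in> Pz"
proof -
  have "gel a b k m False (0, y0) = (2 * of_int k * a, y0 + of_int m * b)" by (simp add: gel_def)
  then show ?thesis using gel_in_korbit by metis
qed

lemma ptB: "((2 * of_int k + 1) * a, -y0 + of_int m * b) \<in> Pz"
proof -
  have "gel a b k m True (0, y0) = ((2 * of_int k + 1) * a, -y0 + of_int m * b)" by (simp add: gel_def)
  then show ?thesis using gel_in_korbit by metis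
qed

lemma pts: "(0, y0) \<in> Pz" "(a, -y0) \<in> Pz" "(a, b - y0) \<in> Pz" "(0, y0 + b) \<in> Pz" "(a, 2*b - y0) \<in> Pz"
  "(2*a, y0) \<in> Pz" "(-a, b - y0) \<in> Pz" "(2*a, y0 + b) \<in> Pz"
  using ptA[of 0 0] ptB[of 0 0] ptB[of 0 1] ptA[of 0 1] ptB[of 0 2] ptA[of 1 0] ptB[of "-1" 1] ptA[of 1 1]
  by (simp_all add: algebra_simps)

lemma dom: "\<exists>w'\<in>korbit a b w. 0 \<le> fst w' \<and> fst w' \<le> a \<and> y0 \<le> snd w' \<and> snd w' \<le> y0 + b"
proof -
  obtain x y where w: "w = (x, y)" by (cases w)
  define j where "j = \<lfloor>x / a\<rfloor>"
  have j0: "of_int j * a \<le> x" using floor_divide_lower[OF a, of x] by (simp add: j_def)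
  have j1: "x < (of_int j + 1) * a" using floor_divide_upper[OF a, of x] by (simp add: j_def)
  obtain w1 where w1: "w1 \<in> korbit a b w" "fst w1 = x - of_int j * a"
  proof (cases "even j")
    case True
    then obtain k where k: "j = 2 * k" by (auto elim: evenE)
    have g: "gel a b (-k) 0 False w = (x - of_int j * a, y)" by (simp add: gel_def w k)
    show ?thesis
    proof (rule that)
      show "gel a b (-k) 0 False w \<in> korbit a b w" by (rule gel_in_korbit)
      show "fst (gel a b (-k) 0 False w) = x - of_int j * a" by (simp add: g)
    qed
  next
    case False
    then obtain k where k: "j = 2 * k + 1" by (auto elim: oddE)
    have g: "gel a b (-k-1) 0 True w = (x - of_int j * a, -y)" by (simp add: gel_def w k algebra_simps)
    show ?thesis
    proof (rule that)
      show "gel a b (-k-1) 0 True w \<in> korbit a b w" by (rule gel_in_korbit)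
      show "fst (gel a b (-k-1) 0 True w) = x - of_int j * a" by (simp add: g)
    qed
  qed
  define y1 where "y1 = snd w1"
  define n where "n = \<lfloor>(y1 - y0) / b\<rfloor>"
  have n0: "of_int n * b \<le> y1 - y0" using floor_divide_lower[OF b, of "y1 - y0"] by (simp add: n_def)
  have n1: "y1 - y0 < (of_int n + 1) * b" using floor_divide_upper[OF b, of "y1 - y0"] by (simp add: n_def)
  define w2 where "w2 = gel a b 0 (-n) False w1"
  have w2e: "w2 = (x - of_int j * a, y1 - of_int n * b)"
    using w1(2) unfolding w2_def y1_def by (cases w1) (simp add: gel_def)
  have "w2 \<in> korbit a b w1" unfolding w2_def by (rule gel_in_korbit)
  then have "w2 \<in> korbit a b w" using korbit_mem_eq[OF w1(1)] by simp
  moreover have "0 \<le> fst w2 \<and> fst w2 \<le> a \<and> y0 \<le> snd w2 \<and> snd w2 \<le> y0 + b"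
    using j0 j1 n0 n1 by (simp add: w2e algebra_simps)
  ultimately show ?thesis by blast
qed

end

lemma ex3:
  assumes "P u \<or> P v \<or> P w" "u \<in> S" "v \<in> S" "w \<in> S"
  shows "\<exists>p\<in>S. P p"
  using assms by blast

context nz
begin

lemma e_x1: "2*a*x1 = e"
  using a by (simp add: x1_def)

lemma x1_le: "x1 \<le> a/2"
proof -
  have "y0 * (2*y0 - b) \<le> 0" using y00 y01 b by (intro mult_nonneg_nonpos) auto
  then have "e \<le> a^2" unfolding e_def by (simp add: power2_eq_square algebra_simps)
  then have "2*a*x1 \<le> 2*a*(a/2)" using e_x1 by (simp add: power2_eq_square)
  then show ?thesis using a by simp
qed

lemma x1_ge: "e \<ge> 0 \<Longrightarrow> x1 \<ge> 0"
  using a by (simp add: x1_def)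

lemma K: "(a - x1)^2 + (b/2 - 2*y0)^2 = MM1"
proof -
  have "(a - x1)^2 + (b/2 - 2*y0)^2 - MM1 = a^2 - 2*a*x1 - 2*b*y0 + 4*y0^2"
    by (simp add: MM1_def power2_eq_square algebra_simps)
  also have "\<dots> = 0" using e_x1 by (simp add: e_def)
  finally show ?thesis by simp
qed

definition "c1 = (a - x1, b/2 - y0)"
definition "c2 = (x1, y0 + b/2)"

lemma reg1_tri:
  assumes e0: "e \<ge> 0" and x: "0 \<le> x" "x \<le> a" and y: "y0 \<le> y" "y \<le> y0 + b"
  shows "(\<exists>v\<in>Pz. (x - fst v)^2 + (y - snd v)^2 \<le> MM1 - ((x - (a - x1))^2 + (y - (b/2 - y0))^2))
       \<or> (\<exists>v\<in>Pz. (x - fst v)^2 + (y - snd v)^2 \<le> MM1 - ((x - x1)^2 + (y - (y0 + b/2))^2))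
       \<or> (\<exists>v\<in>Pz. (x - fst v)^2 + (y - snd v)^2 \<le> MM1 - ((x - (a - x1))^2 + (y - (3*b/2 - y0))^2))"
proof -
  define E1 where "E1 = (0 - x)*((b - y0) - y) - (y0 - y)*(a - x)"
  define E2 where "E2 = (a - x)*((y0 + b) - y) - ((b - y0) - y)*(0 - x)"
  have ab: "a * b > 0" using a b by simp
  have xa: "0 \<le> a - x" using x by simp
  have Kc: "(0 - (a - x1))^2 + (y0 - (b/2 - y0))^2 = MM1" "(a - x1)^2 + ((b - y0) - (y0 + b/2))^2 = MM1"
    "(0 - (a - x1))^2 + ((y0 + b) - (3*b/2 - y0))^2 = MM1"
  proof -
    have "(0 - (a - x1))^2 + (y0 - (b/2 - y0))^2 = (a - x1)^2 + (b/2 - 2*y0)^2"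
      by (simp add: power2_eq_square algebra_simps)
    then show "(0 - (a - x1))^2 + (y0 - (b/2 - y0))^2 = MM1" using K by simp
    have "(a - x1)^2 + ((b - y0) - (y0 + b/2))^2 = (a - x1)^2 + (b/2 - 2*y0)^2"
      by (simp add: power2_eq_square algebra_simps)
    then show "(a - x1)^2 + ((b - y0) - (y0 + b/2))^2 = MM1" using K by simp
    have "(0 - (a - x1))^2 + ((y0 + b) - (3*b/2 - y0))^2 = (a - x1)^2 + (b/2 - 2*y0)^2"
      by (simp add: power2_eq_square algebra_simps)
    then show "(0 - (a - x1))^2 + ((y0 + b) - (3*b/2 - y0))^2 = MM1" using K by simp
  qed
  have Mc: "(a - (a - x1))^2 + ((-y0) - (b/2 - y0))^2 = MM1" "(a - (a - x1))^2 + ((b - y0) - (b/2 - y0))^2 = MM1"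
    "(0 - x1)^2 + (y0 - (y0 + b/2))^2 = MM1" "(0 - x1)^2 + ((y0 + b) - (y0 + b/2))^2 = MM1"
    "(a - (a - x1))^2 + ((b - y0) - (3*b/2 - y0))^2 = MM1" "(a - (a - x1))^2 + ((2*b - y0) - (3*b/2 - y0))^2 = MM1"
    by (simp_all add: MM1_def power2_eq_square algebra_simps)
  consider "E1 \<le> 0" | "E1 \<ge> 0" "E2 \<ge> 0" | "E1 \<ge> 0" "E2 \<le> 0" by linarith
  then show ?thesis
  proof cases
    case 1
    have h1: "(a - x)*((b - y0) - y) - ((-y0) - y)*(a - x) \<ge> 0"
    proof -
      have "(a - x)*((b - y0) - y) - ((-y0) - y)*(a - x) = (a - x) * b" by (simp add: algebra_simps)
      then show ?thesis using xa b by simp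
    qed
    have h2: "(a - x)*(y0 - y) - ((b - y0) - y)*(0 - x) \<ge> 0"
    proof -
      have "(a - x)*(y0 - y) - ((b - y0) - y)*(0 - x) = - E1" by (simp add: E1_def algebra_simps)
      then show ?thesis using 1 by simp
    qed
    have h3: "(0 - x)*((-y0) - y) - (y0 - y)*(a - x) \<ge> 0"
    proof -
      have "(0 - x)*((-y0) - y) - (y0 - y)*(a - x) = x * (y0 + y) + (a - x) * (y - y0)" by (simp add: algebra_simps)
      then show ?thesis using x y y00 xa by (simp add: nn2)
    qed
    have pos: "((a - x)*((b - y0) - y) - ((-y0) - y)*(a - x)) + ((a - x)*(y0 - y) - ((b - y0) - y)*(0 - x))
        + ((0 - x)*((-y0) - y) - (y0 - y)*(a - x)) > 0"
    proof -
      have "((a - x)*((b - y0) - y) - ((-y0) - y)*(a - x)) + ((a - x)*(y0 - y) - ((b - y0) - y)*(0 - x))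
        + ((0 - x)*((-y0) - y) - (y0 - y)*(a - x)) = a * b" by (simp add: algebra_simps)
      then show ?thesis using ab by simp
    qed
    have "(x - 0)^2 + (y - y0)^2 \<le> MM1 - ((x - (a - x1))^2 + (y - (b/2 - y0))^2)
      \<or> (x - a)^2 + (y - (-y0))^2 \<le> MM1 - ((x - (a - x1))^2 + (y - (b/2 - y0))^2)
      \<or> (x - a)^2 + (y - (b - y0))^2 \<le> MM1 - ((x - (a - x1))^2 + (y - (b/2 - y0))^2)"
      using h1 h2 h3 pos Kc(1) Mc(1) Mc(2)
      by (rule tri_bound[where ux=0 and uy=y0 and vx=a and vy="-y0" and wx=a and wy="b-y0" and ox="a-x1" and oy="b/2-y0" and RR=MM1])
    then have "\<exists>v\<in>Pz. (x - fst v)^2 + (y - snd v)^2 \<le> MM1 - ((x - (a - x1))^2 + (y - (b/2 - y0))^2)"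
      by (intro ex3[OF _ pts(1) pts(2) pts(3)]) simp
    then show ?thesis by blast
  next
    case 2
    have h1: "(a - x)*((y0 + b) - y) - ((b - y0) - y)*(0 - x) \<ge> 0" using 2 by (simp add: E2_def)
    have h2: "(0 - x)*(y0 - y) - ((y0 + b) - y)*(0 - x) \<ge> 0"
    proof -
      have "(0 - x)*(y0 - y) - ((y0 + b) - y)*(0 - x) = x * b" by (simp add: algebra_simps)
      then show ?thesis using x b by simp
    qed
    have h3: "(0 - x)*((b - y0) - y) - (y0 - y)*(a - x) \<ge> 0" using 2 by (simp add: E1_def)
    have pos: "((a - x)*((y0 + b) - y) - ((b - y0) - y)*(0 - x)) + ((0 - x)*(y0 - y) - ((y0 + b) - y)*(0 - x))
        + ((0 - x)*((b - y0) - y) - (y0 - y)*(a - x)) > 0"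
    proof -
      have "((a - x)*((y0 + b) - y) - ((b - y0) - y)*(0 - x)) + ((0 - x)*(y0 - y) - ((y0 + b) - y)*(0 - x))
        + ((0 - x)*((b - y0) - y) - (y0 - y)*(a - x)) = a * b" by (simp add: algebra_simps)
      then show ?thesis using ab by simp
    qed
    have "(x - 0)^2 + (y - y0)^2 \<le> MM1 - ((x - x1)^2 + (y - (y0 + b/2))^2)
      \<or> (x - a)^2 + (y - (b - y0))^2 \<le> MM1 - ((x - x1)^2 + (y - (y0 + b/2))^2)
      \<or> (x - 0)^2 + (y - (y0 + b))^2 \<le> MM1 - ((x - x1)^2 + (y - (y0 + b/2))^2)"
      using h1 h2 h3 pos Mc(3) Kc(2) Mc(4)
      by (rule tri_bound[where ux=0 and uy=y0 and vx=a and vy="b-y0" and wx=0 and wy="y0+b" and ox="x1" and oy="y0+b/2" and RR=MM1])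
    then have "\<exists>v\<in>Pz. (x - fst v)^2 + (y - snd v)^2 \<le> MM1 - ((x - x1)^2 + (y - (y0 + b/2))^2)"
      by (intro ex3[OF _ pts(1) pts(3) pts(4)]) simp
    then show ?thesis by blast
  next
    case 3
    have h1: "(a - x)*((2*b - y0) - y) - ((b - y0) - y)*(a - x) \<ge> 0"
    proof -
      have "(a - x)*((2*b - y0) - y) - ((b - y0) - y)*(a - x) = (a - x) * b" by (simp add: algebra_simps)
      then show ?thesis using xa b by simp
    qed
    have h2: "(a - x)*((y0 + b) - y) - ((2*b - y0) - y)*(0 - x) \<ge> 0"
    proof -
      have "(a - x)*((y0 + b) - y) - ((2*b - y0) - y)*(0 - x) = (a - x) * ((y0 + b) - y) + x * ((2*b - y0) - y)"
        by (simp add: algebra_simps)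
      then show ?thesis using x y y00 y01 xa by (simp add: nn2)
    qed
    have h3: "(0 - x)*((b - y0) - y) - ((y0 + b) - y)*(a - x) \<ge> 0"
    proof -
      have "(0 - x)*((b - y0) - y) - ((y0 + b) - y)*(a - x) = - E2" by (simp add: E2_def algebra_simps)
      then show ?thesis using 3 by simp
    qed
    have pos: "((a - x)*((2*b - y0) - y) - ((b - y0) - y)*(a - x)) + ((a - x)*((y0 + b) - y) - ((2*b - y0) - y)*(0 - x))
        + ((0 - x)*((b - y0) - y) - ((y0 + b) - y)*(a - x)) > 0"
    proof -
      have "((a - x)*((2*b - y0) - y) - ((b - y0) - y)*(a - x)) + ((a - x)*((y0 + b) - y) - ((2*b - y0) - y)*(0 - x))
        + ((0 - x)*((b - y0) - y) - ((y0 + b) - y)*(a - x)) = a * b" by (simp add: algebra_simps)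
      then show ?thesis using ab by simp
    qed
    have "(x - 0)^2 + (y - (y0 + b))^2 \<le> MM1 - ((x - (a - x1))^2 + (y - (3*b/2 - y0))^2)
      \<or> (x - a)^2 + (y - (b - y0))^2 \<le> MM1 - ((x - (a - x1))^2 + (y - (3*b/2 - y0))^2)
      \<or> (x - a)^2 + (y - (2*b - y0))^2 \<le> MM1 - ((x - (a - x1))^2 + (y - (3*b/2 - y0))^2)"
      using h1 h2 h3 pos Kc(3) Mc(5) Mc(6)
      by (rule tri_bound[where ux=0 and uy="y0+b" and vx=a and vy="b-y0" and wx=a and wy="2*b-y0" and ox="a-x1" and oy="3*b/2-y0" and RR=MM1])
    then have "\<exists>v\<in>Pz. (x - fst v)^2 + (y - snd v)^2 \<le> MM1 - ((x - (a - x1))^2 + (y - (3*b/2 - y0))^2)"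
      by (intro ex3[OF _ pts(4) pts(3) pts(5)]) simp
    then show ?thesis by blast
  qed
qed

end

lemma sum_min:
  fixes X Y X0 Y0 :: real
  assumes "X \<ge> X0" "Y \<ge> Y0" "X0 + Y0 = MM"
  shows "X + Y \<ge> MM" "X + Y = MM \<Longrightarrow> X = X0 \<and> Y = Y0"
  using assms by linarith+

context nz
begin

lemma orb_cases:
  assumes "u \<in> Pz"
  obtains k m where "u = (2 * of_int k * a, y0 + of_int m * b)"
    | k m where "u = ((2 * of_int k + 1) * a, -y0 + of_int m * b)"
proof -
  obtain k m s where u: "u = gel a b k m s (0, y0)" using assms by (auto simp: in_korbit)
  show ?thesis
  proof (cases s)
    case True then show ?thesis using that(2)[of k m] u by (simp add: gel_def)
  next
    case False then show ?thesis using that(1)[of k m] u by (simp add: gel_def)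
  qed
qed

lemma reg1_main:
  assumes e0: "e \<ge> 0"
  shows "kdist Pz (korbit a b w) \<le> sqrt MM1"
    and "kdist Pz (korbit a b w) \<ge> sqrt MM1 \<Longrightarrow> w \<in> korbit a b c1 \<or> w \<in> korbit a b c2"
proof -
  obtain w' where w': "w' \<in> korbit a b w" "0 \<le> fst w'" "fst w' \<le> a" "y0 \<le> snd w'" "snd w' \<le> y0 + b"
    using dom by blast
  obtain x y where xy: "w' = (x, y)" by (cases w')
  have kw: "korbit a b w = korbit a b (x, y)" using korbit_mem_eq[OF w'(1)] xy by simp
  have win: "w \<in> korbit a b (x, y)" using kw self_in_korbit by metis
  have MM0: "MM1 \<ge> 0" unfolding MM1_def by (intro add_nonneg_nonneg) auto
  have R: "MM1 \<le> (sqrt MM1)^2" using MM0 by simp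
  have M0: "0 \<le> sqrt MM1" using MM0 by simp
  have c3: "korbit a b (a - x1, 3*b/2 - y0) = korbit a b c1"
  proof -
    have "(a - x1, 3*b/2 - y0) = gel a b 0 1 False c1" by (simp add: c1_def gel_def algebra_simps)
    then show ?thesis using korbit_gel by metis
  qed
  have T: "(\<exists>v\<in>Pz. (x - fst v)^2 + (y - snd v)^2 \<le> MM1 - ((x - (a - x1))^2 + (y - (b/2 - y0))^2))
       \<or> (\<exists>v\<in>Pz. (x - fst v)^2 + (y - snd v)^2 \<le> MM1 - ((x - x1)^2 + (y - (y0 + b/2))^2))
       \<or> (\<exists>v\<in>Pz. (x - fst v)^2 + (y - snd v)^2 \<le> MM1 - ((x - (a - x1))^2 + (y - (3*b/2 - y0))^2))"
    using reg1_tri[OF e0] w'(2-5) xy by simp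
  show "kdist Pz (korbit a b w) \<le> sqrt MM1"
    using T bound_from_vertex(1)[OF _ _ R M0] kw by metis
  assume ge: "kdist Pz (korbit a b w) \<ge> sqrt MM1"
  then have ge': "kdist Pz (korbit a b (x, y)) \<ge> sqrt MM1" using kw by simp
  from T show "w \<in> korbit a b c1 \<or> w \<in> korbit a b c2"
  proof (elim disjE bexE)
    fix v assume "v \<in> Pz" "(x - fst v)^2 + (y - snd v)^2 \<le> MM1 - ((x - (a - x1))^2 + (y - (b/2 - y0))^2)"
    then have "(x, y) = c1" using bound_from_vertex(2)[OF _ _ R M0 ge'] by (simp add: c1_def)
    then show ?thesis using win by simp
  next
    fix v assume "v \<in> Pz" "(x - fst v)^2 + (y - snd v)^2 \<le> MM1 - ((x - x1)^2 + (y - (y0 + b/2))^2)"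
    then have "(x, y) = c2" using bound_from_vertex(2)[OF _ _ R M0 ge'] by (simp add: c2_def)
    then show ?thesis using win by simp
  next
    fix v assume "v \<in> Pz" "(x - fst v)^2 + (y - snd v)^2 \<le> MM1 - ((x - (a - x1))^2 + (y - (3*b/2 - y0))^2)"
    then have "(x, y) = (a - x1, 3*b/2 - y0)" using bound_from_vertex(2)[OF _ _ R M0 ge'] by simp
    then show ?thesis using win c3 by simp
  qed
qed

end

context nz
begin

lemma MM1_alt: "MM1 = x1^2 + (b/2)^2"
  by (simp add: MM1_def power_divide)

lemma y0_ne: "y0 = 0 \<Longrightarrow> x1 = a/2"
proof -
  assume h: "y0 = 0"
  have "x1 = (a^2 - 2*b*y0 + 4*y0^2)/(2*a)" by (simp add: x1_def e_def)
  also have "\<dots> = a/2" using h a by (simp add: power2_eq_square)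
  finally show ?thesis .
qed

definition "S2 = {(0, y0), (0, y0 + b), (a, b - y0)} \<union> (if y0 = 0 then {(a, -y0)} else {}) \<union> (if x1 = 0 then {(-a, b - y0)} else {})"

lemma c2_low:
  assumes e0: "e \<ge> 0" and u: "u \<in> Pz"
  shows "(fst u - x1)^2 + (snd u - (y0 + b/2))^2 \<ge> MM1"
    and "(fst u - x1)^2 + (snd u - (y0 + b/2))^2 = MM1 \<Longrightarrow> u \<in> S2"
proof -
  have x10: "0 \<le> x1" using x1_ge[OF e0] .
  have x1a: "x1 \<le> a/2" by (rule x1_le)
  have "((fst u - x1)^2 + (snd u - (y0 + b/2))^2 \<ge> MM1) \<and>
        ((fst u - x1)^2 + (snd u - (y0 + b/2))^2 = MM1 \<longrightarrow> u \<in> S2)"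
  proof (cases rule: orb_cases[OF u])
    case (1 k m)
    have X: "(fst u - x1)^2 = (of_int k * (2*a) - x1)^2" by (simp add: 1 algebra_simps)
    have Y: "(snd u - (y0 + b/2))^2 = (of_int m * b - b/2)^2" by (simp add: 1 algebra_simps)
    have iX: "(of_int k * (2*a) - x1)^2 \<ge> x1^2 \<and> ((of_int k * (2*a) - x1)^2 = x1^2 \<longleftrightarrow> k = 0 \<or> (k = 1 \<and> x1 = 2*a/2))"
      using int_sq_ge[of "2*a" x1 k] a x10 x1a by simp
    have iY: "(of_int m * b - b/2)^2 \<ge> (b/2)^2 \<and> ((of_int m * b - b/2)^2 = (b/2)^2 \<longleftrightarrow> m = 0 \<or> (m = 1 \<and> b/2 = b/2))"
      using int_sq_ge[of b "b/2" m] b by simp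
    have sm: "x1^2 + (b/2)^2 = MM1" by (simp add: MM1_alt)
    show ?thesis
    proof
      show "(fst u - x1)^2 + (snd u - (y0 + b/2))^2 \<ge> MM1" using sum_min(1)[OF _ _ sm] iX iY X Y by simp
      show "(fst u - x1)^2 + (snd u - (y0 + b/2))^2 = MM1 \<longrightarrow> u \<in> S2"
      proof
        assume "(fst u - x1)^2 + (snd u - (y0 + b/2))^2 = MM1"
        then have "(of_int k * (2*a) - x1)^2 = x1^2" "(of_int m * b - b/2)^2 = (b/2)^2"
          using sum_min(2)[OF _ _ sm] iX iY X Y by auto
        then have "k = 0" "m = 0 \<or> m = 1" using iX iY a x1a by auto
        then show "u \<in> S2" unfolding S2_def using 1 by auto
      qed
    qed
  next
    case (2 k m)
    have X: "(fst u - x1)^2 = (of_int (-k) * (2*a) - (a - x1))^2" by (simp add: 2 power2_eq_square algebra_simps)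
    have Y: "(snd u - (y0 + b/2))^2 = (of_int (1 - m) * b - (b/2 - 2*y0))^2" by (simp add: 2 power2_eq_square algebra_simps)
    have iX: "(of_int (-k) * (2*a) - (a - x1))^2 \<ge> (a - x1)^2 \<and> ((of_int (-k) * (2*a) - (a - x1))^2 = (a - x1)^2 \<longleftrightarrow> -k = 0 \<or> (-k = 1 \<and> a - x1 = 2*a/2))"
      using int_sq_ge[of "2*a" "a - x1" "-k"] a x10 x1a by simp
    have iY: "(of_int (1 - m) * b - (b/2 - 2*y0))^2 \<ge> (b/2 - 2*y0)^2 \<and> ((of_int (1 - m) * b - (b/2 - 2*y0))^2 = (b/2 - 2*y0)^2 \<longleftrightarrow> 1 - m = 0 \<or> (1 - m = 1 \<and> b/2 - 2*y0 = b/2))"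
      using int_sq_ge[of b "b/2 - 2*y0" "1 - m"] b y00 y01 by simp
    have sm: "(a - x1)^2 + (b/2 - 2*y0)^2 = MM1" by (rule K)
    show ?thesis
    proof
      show "(fst u - x1)^2 + (snd u - (y0 + b/2))^2 \<ge> MM1" using sum_min(1)[OF _ _ sm] iX iY X Y by simp
      show "(fst u - x1)^2 + (snd u - (y0 + b/2))^2 = MM1 \<longrightarrow> u \<in> S2"
      proof
        assume "(fst u - x1)^2 + (snd u - (y0 + b/2))^2 = MM1"
        then have "(of_int (-k) * (2*a) - (a - x1))^2 = (a - x1)^2" "(of_int (1 - m) * b - (b/2 - 2*y0))^2 = (b/2 - 2*y0)^2"
          using sum_min(2)[OF _ _ sm] iX iY X Y by auto
        then have kk: "k = 0 \<or> (k = -1 \<and> x1 = 0)" and mm: "m = 1 \<or> (m = 0 \<and> y0 = 0)" using iX iY a b by auto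
        have "\<not> (x1 = 0 \<and> y0 = 0)" using y0_ne a by auto
        then show "u \<in> S2" unfolding S2_def using 2 kk mm by auto
      qed
    qed
  qed
  then show "(fst u - x1)^2 + (snd u - (y0 + b/2))^2 \<ge> MM1"
    and "(fst u - x1)^2 + (snd u - (y0 + b/2))^2 = MM1 \<Longrightarrow> u \<in> S2" by auto
qed

end

lemma count_set:
  fixes Z S :: "(real \<times> real) set" and cx cy MM :: real
  assumes low: "\<And>u. u \<in> Z \<Longrightarrow> (fst u - cx)^2 + (snd u - cy)^2 \<ge> MM"
    and eqv: "\<And>u. u \<in> Z \<Longrightarrow> (fst u - cx)^2 + (snd u - cy)^2 = MM \<Longrightarrow> u \<in> S"
    and pts: "\<And>u. u \<in> S \<Longrightarrow> u \<in> Z \<and> (fst u - cx)^2 + (snd u - cy)^2 = MM"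
    and MM: "MM \<ge> 0"
  shows "{u \<in> Z. dist u (cx, cy) = sqrt MM} = S" and "\<And>u. u \<in> Z \<Longrightarrow> dist u (cx, cy) \<ge> sqrt MM"
proof -
  have d: "dist u (cx, cy) = sqrt ((fst u - cx)^2 + (snd u - cy)^2)" for u
    by (cases u) (simp add: dist_sq)
  show "\<And>u. u \<in> Z \<Longrightarrow> dist u (cx, cy) \<ge> sqrt MM" using low d by simp
  show "{u \<in> Z. dist u (cx, cy) = sqrt MM} = S"
  proof (intro set_eqI iffI)
    fix u assume "u \<in> {u \<in> Z. dist u (cx, cy) = sqrt MM}"
    then have u: "u \<in> Z" "sqrt ((fst u - cx)^2 + (snd u - cy)^2) = sqrt MM" using d by auto
    then have "(fst u - cx)^2 + (snd u - cy)^2 = MM" using MM by (simp add: real_sqrt_eq_iff)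
    then show "u \<in> S" using eqv u(1) by blast
  next
    fix u assume "u \<in> S"
    then show "u \<in> {u \<in> Z. dist u (cx, cy) = sqrt MM}" using pts d by auto
  qed
qed

context nz
begin

lemma MM1_nonneg: "MM1 \<ge> 0" unfolding MM1_def by (intro add_nonneg_nonneg) auto

definition "S1 = {(0, y0), (a, -y0), (a, b - y0)}"

lemma c1_low:
  assumes e0: "e \<ge> 0" and u: "u \<in> Pz"
  shows "(fst u - (a - x1))^2 + (snd u - (b/2 - y0))^2 \<ge> MM1"
    and "x1 \<noteq> 0 \<Longrightarrow> y0 \<noteq> 0 \<Longrightarrow> (fst u - (a - x1))^2 + (snd u - (b/2 - y0))^2 = MM1 \<Longrightarrow> u \<in> S1"
proof -
  have x10: "0 \<le> x1" using x1_ge[OF e0] .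
  have x1a: "x1 \<le> a/2" by (rule x1_le)
  have "((fst u - (a - x1))^2 + (snd u - (b/2 - y0))^2 \<ge> MM1) \<and>
        (x1 \<noteq> 0 \<longrightarrow> y0 \<noteq> 0 \<longrightarrow> (fst u - (a - x1))^2 + (snd u - (b/2 - y0))^2 = MM1 \<longrightarrow> u \<in> S1)"
  proof (cases rule: orb_cases[OF u])
    case (1 k m)
    have X: "(fst u - (a - x1))^2 = (of_int k * (2*a) - (a - x1))^2" by (simp add: 1 algebra_simps)
    have Y: "(snd u - (b/2 - y0))^2 = (of_int m * b - (b/2 - 2*y0))^2" by (simp add: 1 power2_eq_square algebra_simps)
    have iX: "(of_int k * (2*a) - (a - x1))^2 \<ge> (a - x1)^2 \<and> ((of_int k * (2*a) - (a - x1))^2 = (a - x1)^2 \<longleftrightarrow> k = 0 \<or> (k = 1 \<and> a - x1 = 2*a/2))"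
      using int_sq_ge[of "2*a" "a - x1" k] a x10 x1a by simp
    have iY: "(of_int m * b - (b/2 - 2*y0))^2 \<ge> (b/2 - 2*y0)^2 \<and> ((of_int m * b - (b/2 - 2*y0))^2 = (b/2 - 2*y0)^2 \<longleftrightarrow> m = 0 \<or> (m = 1 \<and> b/2 - 2*y0 = b/2))"
      using int_sq_ge[of b "b/2 - 2*y0" m] b y00 y01 by simp
    have sm: "(a - x1)^2 + (b/2 - 2*y0)^2 = MM1" by (rule K)
    show ?thesis
    proof
      show "(fst u - (a - x1))^2 + (snd u - (b/2 - y0))^2 \<ge> MM1" using sum_min(1)[OF _ _ sm] iX iY X Y by simp
      show "x1 \<noteq> 0 \<longrightarrow> y0 \<noteq> 0 \<longrightarrow> (fst u - (a - x1))^2 + (snd u - (b/2 - y0))^2 = MM1 \<longrightarrow> u \<in> S1"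
      proof (intro impI)
        assume nz: "x1 \<noteq> 0" "y0 \<noteq> 0" and "(fst u - (a - x1))^2 + (snd u - (b/2 - y0))^2 = MM1"
        then have "(of_int k * (2*a) - (a - x1))^2 = (a - x1)^2" "(of_int m * b - (b/2 - 2*y0))^2 = (b/2 - 2*y0)^2"
          using sum_min(2)[OF _ _ sm] iX iY X Y by auto
        then have "k = 0" "m = 0" using iX iY a nz by auto
        then show "u \<in> S1" unfolding S1_def using 1 by auto
      qed
    qed
  next
    case (2 k m)
    have X: "(fst u - (a - x1))^2 = (of_int (-k) * (2*a) - x1)^2" by (simp add: 2 power2_eq_square algebra_simps)
    have Y: "(snd u - (b/2 - y0))^2 = (of_int m * b - b/2)^2" by (simp add: 2 algebra_simps)
    have iX: "(of_int (-k) * (2*a) - x1)^2 \<ge> x1^2 \<and> ((of_int (-k) * (2*a) - x1)^2 = x1^2 \<longleftrightarrow> -k = 0 \<or> (-k = 1 \<and> x1 = 2*a/2))"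
      using int_sq_ge[of "2*a" x1 "-k"] a x10 x1a by simp
    have iY: "(of_int m * b - b/2)^2 \<ge> (b/2)^2 \<and> ((of_int m * b - b/2)^2 = (b/2)^2 \<longleftrightarrow> m = 0 \<or> (m = 1 \<and> b/2 = b/2))"
      using int_sq_ge[of b "b/2" m] b by simp
    have sm: "x1^2 + (b/2)^2 = MM1" by (simp add: MM1_alt)
    show ?thesis
    proof
      show "(fst u - (a - x1))^2 + (snd u - (b/2 - y0))^2 \<ge> MM1" using sum_min(1)[OF _ _ sm] iX iY X Y by simp
      show "x1 \<noteq> 0 \<longrightarrow> y0 \<noteq> 0 \<longrightarrow> (fst u - (a - x1))^2 + (snd u - (b/2 - y0))^2 = MM1 \<longrightarrow> u \<in> S1"
      proof (intro impI)
        assume "(fst u - (a - x1))^2 + (snd u - (b/2 - y0))^2 = MM1"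
        then have "(of_int (-k) * (2*a) - x1)^2 = x1^2" "(of_int m * b - b/2)^2 = (b/2)^2"
          using sum_min(2)[OF _ _ sm] iX iY X Y by auto
        then have "k = 0" "m = 0 \<or> m = 1" using iX iY a x1a by auto
        then show "u \<in> S1" unfolding S1_def using 2 by auto
      qed
    qed
  qed
  then show "(fst u - (a - x1))^2 + (snd u - (b/2 - y0))^2 \<ge> MM1"
    and "x1 \<noteq> 0 \<Longrightarrow> y0 \<noteq> 0 \<Longrightarrow> (fst u - (a - x1))^2 + (snd u - (b/2 - y0))^2 = MM1 \<Longrightarrow> u \<in> S1" by auto
qed

lemma c2_count:
  assumes e0: "e \<ge> 0"
  shows "{u \<in> Pz. dist u c2 = sqrt MM1} = S2" and "\<And>u. u \<in> Pz \<Longrightarrow> dist u c2 \<ge> sqrt MM1"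
proof -
  have pts2: "u \<in> Pz \<and> (fst u - x1)^2 + (snd u - (y0 + b/2))^2 = MM1" if uS: "u \<in> S2" for u
  proof -
    have Kf: "(a - x1)^2 + (b/2 - 2*y0)^2 = MM1" by (rule K)
    consider "u = (0, y0)" | "u = (0, y0 + b)" | "u = (a, b - y0)" | "y0 = 0" "u = (a, -y0)" | "x1 = 0" "u = (-a, b - y0)"
      using uS unfolding S2_def by (auto split: if_splits)
    then show ?thesis
    proof cases
      case 1 then show ?thesis using pts by (simp add: MM1_def power2_eq_square algebra_simps)
    next
      case 2 then show ?thesis using pts by (simp add: MM1_def power2_eq_square algebra_simps)
    next
      case 3
      have "(a - x1)^2 + (b - y0 - (y0 + b/2))^2 = (a - x1)^2 + (b/2 - 2*y0)^2" by (simp add: power2_eq_square algebra_simps)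
      then show ?thesis using 3 pts Kf by simp
    next
      case 4
      have "(a - x1)^2 + (- y0 - (y0 + b/2))^2 = (a - x1)^2 + (b/2 - 2*y0)^2" using 4 by (simp add: power2_eq_square algebra_simps)
      then show ?thesis using 4 pts Kf by simp
    next
      case 5
      have "(- a - x1)^2 + (b - y0 - (y0 + b/2))^2 = (a - x1)^2 + (b/2 - 2*y0)^2" using 5 by (simp add: power2_eq_square algebra_simps)
      then show ?thesis using 5 pts Kf by simp
    qed
  qed
  show "{u \<in> Pz. dist u c2 = sqrt MM1} = S2" "\<And>u. u \<in> Pz \<Longrightarrow> dist u c2 \<ge> sqrt MM1"
    using count_set[where Z=Pz and cx=x1 and cy="y0 + b/2" and MM=MM1 and S=S2, OF c2_low(1)[OF e0] c2_low(2)[OF e0] pts2 MM1_nonneg]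
    unfolding c2_def by blast+
qed

lemma c1_count:
  assumes e0: "e \<ge> 0" and nz: "x1 \<noteq> 0" "y0 \<noteq> 0"
  shows "{u \<in> Pz. dist u c1 = sqrt MM1} = S1" and "\<And>u. u \<in> Pz \<Longrightarrow> dist u c1 \<ge> sqrt MM1"
proof -
  have pts1: "u \<in> Pz \<and> (fst u - (a - x1))^2 + (snd u - (b/2 - y0))^2 = MM1" if uS: "u \<in> S1" for u
  proof -
    have Kf: "(a - x1)^2 + (b/2 - 2*y0)^2 = MM1" by (rule K)
    consider "u = (0, y0)" | "u = (a, -y0)" | "u = (a, b - y0)"
      using uS unfolding S1_def by auto
    then show ?thesis
    proof cases
      case 1
      have "(0 - (a - x1))^2 + (y0 - (b/2 - y0))^2 = (a - x1)^2 + (b/2 - 2*y0)^2" by (simp add: power2_eq_square algebra_simps)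
      then show ?thesis using 1 pts Kf by simp
    next
      case 2 then show ?thesis using pts by (simp add: MM1_def power2_eq_square algebra_simps)
    next
      case 3 then show ?thesis using pts by (simp add: MM1_def power2_eq_square algebra_simps)
    qed
  qed
  show "{u \<in> Pz. dist u c1 = sqrt MM1} = S1" "\<And>u. u \<in> Pz \<Longrightarrow> dist u c1 \<ge> sqrt MM1"
    using count_set[where Z=Pz and cx="a - x1" and cy="b/2 - y0" and MM=MM1 and S=S1, OF c1_low(1)[OF e0] c1_low(2)[OF e0 _ nz] pts1 MM1_nonneg]
    unfolding c1_def by blast+
qed

end

context nz
begin

lemma segcount: "card (ksegments a b Pz (korbit a b c)) = card {u \<in> Pz. dist u c = kdist Pz (korbit a b c)}"
  by (rule card_ksegments[OF a b korbit_in_klein korbit_in_klein self_in_korbit])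

lemma reg1_special:
  assumes e0: "e \<ge> 0" and sp: "y0 = 0 \<or> x1 = 0"
  shows "card (kfar a b Pz) = 1 \<and> card (kfarn a b 4 Pz) = 1"
proof -
  have c1c2: "c1 \<in> korbit a b c2"
  proof (cases "y0 = 0")
    case True
    then have hx: "x1 = a/2" using y0_ne by simp
    have "c1 = c2" unfolding c1_def c2_def prod_eq_iff fst_conv snd_conv using hx True by linarith
    then show ?thesis using self_in_korbit by metis
  next
    case False
    then have x0: "x1 = 0" using sp by simp
    have "c1 = gel a b 0 1 True c2" using x0 by (simp add: c1_def c2_def gel_def)
    then show ?thesis using gel_in_korbit by metis
  qed
  have kc: "korbit a b c1 = korbit a b c2" using korbit_mem_eq[OF c1c2] .
  have up: "\<And>w. kdist Pz (korbit a b w) \<le> sqrt MM1" using reg1_main(1)[OF e0] .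
  have eq: "\<And>w. kdist Pz (korbit a b w) \<ge> sqrt MM1 \<Longrightarrow> \<exists>c\<in>{c2}. w \<in> korbit a b c"
    using reg1_main(2)[OF e0] kc by auto
  have low: "\<And>c u. c \<in> {c2} \<Longrightarrow> u \<in> Pz \<Longrightarrow> sqrt MM1 \<le> dist u c"
    using c2_count(2)[OF e0] by auto
  have A: "kfar a b Pz = korbit a b ` {c2}" "kdist Pz (korbit a b c2) = sqrt MM1"
    using assemble_kfar(1)[OF up eq low] assemble_kfar(2)[OF up eq low] by simp_all
  have S2c: "card S2 = 4"
  proof (cases "y0 = 0")
    case True
    then have "x1 \<noteq> 0" using y0_ne a by simp
    then show ?thesis using True a b unfolding S2_def by simp
  next
    case False
    then have "x1 = 0" using sp by simp
    then show ?thesis using False a b y00 y01 unfolding S2_def by auto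
  qed
  have "card (ksegments a b Pz (korbit a b c2)) = 4"
    using segcount[of c2] A(2) c2_count(1)[OF e0] S2c by simp
  then have "kfarn a b 4 Pz = {korbit a b c2}" unfolding kfarn_def A(1) by auto
  then show ?thesis using A(1) by simp
qed

lemma reg1_generic:
  assumes e0: "e \<ge> 0" and g: "y0 \<noteq> 0" "x1 \<noteq> 0"
  shows "card (kfar a b Pz) = 2 \<and> card (kfarn a b 3 Pz) = 2"
proof -
  have x10: "x1 > 0" using x1_ge[OF e0] g by simp
  have y0p: "y0 > 0" using y00 g by simp
  have nc: "c1 \<notin> korbit a b c2"
  proof
    assume "c1 \<in> korbit a b c2"
    then obtain k m s where ks: "c1 = gel a b k m s c2" by (auto simp: in_korbit)
    show False
    proof (cases s)
      case True
      then have "a - x1 = x1 + (2 * of_int k + 1) * a" using ks by (simp add: c1_def c2_def gel_def)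
      then have "of_int k * a = - x1" by (simp add: algebra_simps)
      then have "of_int k * a < 0" using x10 by simp
      then have "of_int k < (0::real)" using a by (simp add: mult_less_0_iff)
      then have "of_int k \<le> (-1::real)" by (metis int_real_cases not_le)
      then have "of_int k * a \<le> (-1) * a" using a by (intro mult_right_mono) auto
      then show False using \<open>of_int k * a = - x1\<close> x1_le a by simp
    next
      case False
      then have "b/2 - y0 = (y0 + b/2) + of_int m * b" using ks by (simp add: c1_def c2_def gel_def)
      then have "of_int m * b = - 2 * y0" by (simp add: algebra_simps)
      then have "of_int m * b < 0" using y0p by simp
      then have "of_int m < (0::real)" using b by (simp add: mult_less_0_iff)
      then have "of_int m \<le> (-1::real)" by (metis int_real_cases not_le)
      then have "of_int m * b \<le> (-1) * b" using b by (intro mult_right_mono) auto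
      then show False using \<open>of_int m * b = - 2 * y0\<close> y01 b by simp
    qed
  qed
  have ne: "korbit a b c1 \<noteq> korbit a b c2" using nc korbit_eq_iff by metis
  have low: "\<And>c u. c \<in> {c1, c2} \<Longrightarrow> u \<in> Pz \<Longrightarrow> sqrt MM1 \<le> dist u c"
    using c1_count(2)[OF e0 g(2) g(1)] c2_count(2)[OF e0] by auto
  have up: "\<And>w. kdist Pz (korbit a b w) \<le> sqrt MM1" using reg1_main(1)[OF e0] .
  have eq: "\<And>w. kdist Pz (korbit a b w) \<ge> sqrt MM1 \<Longrightarrow> \<exists>c\<in>{c1, c2}. w \<in> korbit a b c"
    using reg1_main(2)[OF e0] by auto
  have A: "kfar a b Pz = korbit a b ` {c1, c2}" "\<And>c. c \<in> {c1, c2} \<Longrightarrow> kdist Pz (korbit a b c) = sqrt MM1"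
    using assemble_kfar(1)[OF up eq low] assemble_kfar(2)[OF up eq low] by simp_all
  have S1c: "card S1 = 3" using a b unfolding S1_def by auto
  have S2c: "card S2 = 3" using a b g y00 y01 unfolding S2_def by auto
  have s1: "card (ksegments a b Pz (korbit a b c1)) = 3"
    using segcount[of c1] A(2)[of c1] c1_count(1)[OF e0 g(2) g(1)] S1c by simp
  have s2: "card (ksegments a b Pz (korbit a b c2)) = 3"
    using segcount[of c2] A(2)[of c2] c2_count(1)[OF e0] S2c by simp
  have "kfarn a b 3 Pz = {korbit a b c1, korbit a b c2}" unfolding kfarn_def A(1) using s1 s2 by auto
  then show ?thesis using A(1) ne by simp
qed

end

context nz
begin

definition "hh = b - 2*y0"
definition "gg = 2*y0"
definition "RU = (hh^2 + a^2) / (2*hh)"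
definition "RD = (gg^2 + a^2) / (2*gg)"
definition "cU = (a, b - y0 - RU)"
definition "cD = (a, b - y0 + RD)"

lemma hh_pos: "hh \<ge> b/2" "hh > 0" using y01 b by (simp_all add: hh_def)

lemma reg2_facts:
  assumes e0: "e < 0"
  shows "y0 > 0" "gg > 0" "a^2 < gg * hh" "gg \<le> hh" "2*hh*RU = a^2 + hh^2" "2*gg*RD = a^2 + gg^2"
    "0 < hh - RU" "hh - RU < b/2" "0 < RU" "RU < b/2" "0 < RD" "RD \<le> RU" "RD = RU \<longleftrightarrow> y0 = b/4"
    "a < b/2"
proof -
  have egh: "e = a^2 - gg * hh" by (simp add: e_def gg_def hh_def power2_eq_square algebra_simps)
  have agh: "a^2 < gg * hh" using e0 egh by simp
  have "0 < a^2" using a by simp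
  then have ghp: "gg * hh > 0" using agh by linarith
  have h0: "hh > 0" using hh_pos by simp
  have g0: "gg > 0" using ghp h0 by (simp add: zero_less_mult_iff)
  then show y0p: "y0 > 0" by (simp add: gg_def)
  show "gg > 0" by (fact g0)
  show "a^2 < gg * hh" by (fact agh)
  show gh: "gg \<le> hh" using y01 by (simp add: gg_def hh_def)
  show RUe: "2*hh*RU = a^2 + hh^2" using h0 by (simp add: RU_def)
  show RDe: "2*gg*RD = a^2 + gg^2" using g0 by (simp add: RD_def)
  have "gg * hh \<le> hh * hh" using gh h0 by (intro mult_right_mono) auto
  then have ah: "a^2 < hh^2" using agh by (simp add: power2_eq_square)
  have "2*hh*(hh - RU) = hh^2 - a^2" using RUe by (simp add: power2_eq_square algebra_simps)
  then have hR: "2*hh*(hh - RU) > 0" "2*hh*(hh - RU) < hh * hh" using ah a by (simp_all add: power2_eq_square)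
  show "0 < hh - RU" using hR(1) h0 by (simp add: zero_less_mult_iff)
  have "hh - RU < hh / 2" using hR(2) h0 by (simp add: field_simps)
  moreover have "hh \<le> b" using y00 by (simp add: hh_def)
  ultimately show "hh - RU < b/2" by simp
  show RUp: "0 < RU" unfolding RU_def using h0 a by (intro divide_pos_pos add_pos_pos) simp_all
  have "2*hh*RU < 2*hh*(b/2)"
  proof -
    have "2*hh*(b/2) = hh * (hh + gg)" by (simp add: hh_def gg_def algebra_simps)
    then show ?thesis using RUe agh by (simp add: power2_eq_square algebra_simps)
  qed
  then show "RU < b/2" using h0 by simp
  show "0 < RD" unfolding RD_def using g0 a by (intro divide_pos_pos add_pos_pos) simp_all
  have key: "2*gg*hh*(RU - RD) = (hh - gg)*(gg*hh - a^2)"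
  proof -
    have "2*gg*hh*(RU - RD) = gg*(2*hh*RU) - hh*(2*gg*RD)" by (simp add: algebra_simps)
    also have "\<dots> = gg*(a^2 + hh^2) - hh*(a^2 + gg^2)" using RUe RDe by simp
    also have "\<dots> = (hh - gg)*(gg*hh - a^2)" by (simp add: power2_eq_square algebra_simps)
    finally show ?thesis .
  qed
  have pgh: "2*gg*hh > 0" using g0 h0 by simp
  have "(hh - gg)*(gg*hh - a^2) \<ge> 0" using gh agh by simp
  then have "2*gg*hh*(RU - RD) \<ge> 0" using key by simp
  then show "RD \<le> RU" using pgh by (simp add: zero_le_mult_iff)
  have "RD = RU \<longleftrightarrow> 2*gg*hh*(RU - RD) = 0" using g0 h0 by auto
  also have "\<dots> \<longleftrightarrow> hh = gg" using key agh by simp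
  also have "\<dots> \<longleftrightarrow> y0 = b/4" by (auto simp: hh_def gg_def)
  finally show "RD = RU \<longleftrightarrow> y0 = b/4" .
  have "a^2 < (b/2)^2"
  proof -
    have "gg * hh \<le> (b/2)^2"
    proof -
      have "(b/2)^2 - gg*hh = (hh - gg)^2 / 4" by (simp add: hh_def gg_def power2_eq_square field_simps)
      then show ?thesis by (smt (verit) zero_le_divide_iff zero_le_power2)
    qed
    then show ?thesis using agh by simp
  qed
  then show "a < b/2" using b by (intro power_less_imp_less_base[of a 2 "b/2"]) simp_all
qed

lemma reg2_tri:
  assumes e0: "e < 0" and x: "0 \<le> x" "x \<le> a" and y: "y0 \<le> y" "y \<le> y0 + b"
  shows "(\<exists>v\<in>Pz. (x - fst v)^2 + (y - snd v)^2 \<le> RU^2 - ((x - a)^2 + (y - (b - y0 - RU))^2))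
       \<or> (\<exists>v\<in>Pz. (x - fst v)^2 + (y - snd v)^2 \<le> RU^2 - ((x - 0)^2 + (y - (y0 + RU))^2))
       \<or> (\<exists>v\<in>Pz. (x - fst v)^2 + (y - snd v)^2 \<le> RD^2 - ((x - 0)^2 + (y - (y0 + b - RD))^2))
       \<or> (\<exists>v\<in>Pz. (x - fst v)^2 + (y - snd v)^2 \<le> RD^2 - ((x - a)^2 + (y - (b - y0 + RD))^2))"
proof -
  note F = reg2_facts[OF e0]
  define E1 where "E1 = (0 - x)*((b - y0) - y) - (y0 - y)*(a - x)"
  define E2 where "E2 = (a - x)*((y0 + b) - y) - ((b - y0) - y)*(0 - x)"
  have xa: "0 \<le> a - x" using x by simp
  have h0: "hh > 0" using hh_pos by simp
  have ahp: "2 * a * hh > 0" using a h0 by simp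
  have ay: "4 * a * y0 > 0" using a F(1) by simp
  have RUc: "(0 - a)^2 + (y0 - (b - y0 - RU))^2 = RU^2" "(2*a - a)^2 + (y0 - (b - y0 - RU))^2 = RU^2"
    "(a - a)^2 + ((b - y0) - (b - y0 - RU))^2 = RU^2"
    "(0 - 0)^2 + (y0 - (y0 + RU))^2 = RU^2" "(a - 0)^2 + ((b - y0) - (y0 + RU))^2 = RU^2"
    "(-a - 0)^2 + ((b - y0) - (y0 + RU))^2 = RU^2"
  proof -
    have q: "a^2 + (RU - hh)^2 = RU^2" using F(5) by (simp add: power2_eq_square algebra_simps)
    show "(0 - a)^2 + (y0 - (b - y0 - RU))^2 = RU^2" "(2*a - a)^2 + (y0 - (b - y0 - RU))^2 = RU^2"
      "(a - 0)^2 + ((b - y0) - (y0 + RU))^2 = RU^2" "(-a - 0)^2 + ((b - y0) - (y0 + RU))^2 = RU^2"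
      using q by (simp_all add: hh_def power2_eq_square algebra_simps)
    show "(a - a)^2 + ((b - y0) - (b - y0 - RU))^2 = RU^2" "(0 - 0)^2 + (y0 - (y0 + RU))^2 = RU^2" by simp_all
  qed
  have RDc: "(-a - 0)^2 + ((b - y0) - (y0 + b - RD))^2 = RD^2" "(a - 0)^2 + ((b - y0) - (y0 + b - RD))^2 = RD^2"
    "(0 - 0)^2 + ((y0 + b) - (y0 + b - RD))^2 = RD^2"
    "(0 - a)^2 + ((y0 + b) - (b - y0 + RD))^2 = RD^2" "(a - a)^2 + ((b - y0) - (b - y0 + RD))^2 = RD^2"
    "(2*a - a)^2 + ((y0 + b) - (b - y0 + RD))^2 = RD^2"
  proof -
    have q: "a^2 + (RD - gg)^2 = RD^2" using F(6) by (simp add: power2_eq_square algebra_simps)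
    show "(-a - 0)^2 + ((b - y0) - (y0 + b - RD))^2 = RD^2" "(a - 0)^2 + ((b - y0) - (y0 + b - RD))^2 = RD^2"
      "(0 - a)^2 + ((y0 + b) - (b - y0 + RD))^2 = RD^2" "(2*a - a)^2 + ((y0 + b) - (b - y0 + RD))^2 = RD^2"
      using q by (simp_all add: gg_def power2_eq_square algebra_simps)
    show "(0 - 0)^2 + ((y0 + b) - (y0 + b - RD))^2 = RD^2" "(a - a)^2 + ((b - y0) - (b - y0 + RD))^2 = RD^2" by simp_all
  qed
  consider "y \<le> b - y0" "E1 \<le> 0" | "y \<le> b - y0" "E1 \<ge> 0" | "y \<ge> b - y0" "E2 \<ge> 0" | "y \<ge> b - y0" "E2 \<le> 0"
    by linarith
  then show ?thesis
  proof cases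
    case 1
    have h1: "(2*a - x)*((b - y0) - y) - (y0 - y)*(a - x) \<ge> 0"
    proof -
      have eq: "(2*a - x)*((b - y0) - y) - (y0 - y)*(a - x) = (2*a - x)*((b - y0) - y) + (a - x)*(y - y0)"
        by (simp add: algebra_simps)
      have "0 \<le> (2*a - x)*((b - y0) - y) + (a - x)*(y - y0)" by (intro nn2) (use x y 1 xa a in linarith)+
      then show ?thesis unfolding eq .
    qed
    have h2: "(a - x)*(y0 - y) - ((b - y0) - y)*(0 - x) \<ge> 0"
    proof -
      have "(a - x)*(y0 - y) - ((b - y0) - y)*(0 - x) = - E1" by (simp add: E1_def algebra_simps)
      then show ?thesis using 1 by simp
    qed
    have h3: "(0 - x)*(y0 - y) - (y0 - y)*(2*a - x) \<ge> 0"
    proof -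
      have "(0 - x)*(y0 - y) - (y0 - y)*(2*a - x) = (2*a)*(y - y0)" by (simp add: algebra_simps)
      then show ?thesis using y a by simp
    qed
    have pos: "((2*a - x)*((b - y0) - y) - (y0 - y)*(a - x)) + ((a - x)*(y0 - y) - ((b - y0) - y)*(0 - x))
        + ((0 - x)*(y0 - y) - (y0 - y)*(2*a - x)) > 0"
    proof -
      have "((2*a - x)*((b - y0) - y) - (y0 - y)*(a - x)) + ((a - x)*(y0 - y) - ((b - y0) - y)*(0 - x))
        + ((0 - x)*(y0 - y) - (y0 - y)*(2*a - x)) = 2 * a * hh" by (simp add: hh_def algebra_simps)
      then show ?thesis using ahp by simp
    qed
    have "(x - 0)^2 + (y - y0)^2 \<le> RU^2 - ((x - a)^2 + (y - (b - y0 - RU))^2)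
      \<or> (x - 2*a)^2 + (y - y0)^2 \<le> RU^2 - ((x - a)^2 + (y - (b - y0 - RU))^2)
      \<or> (x - a)^2 + (y - (b - y0))^2 \<le> RU^2 - ((x - a)^2 + (y - (b - y0 - RU))^2)"
      using h1 h2 h3 pos RUc(1) RUc(2) RUc(3)
      by (rule tri_bound[where ux=0 and uy=y0 and vx="2*a" and vy=y0 and wx=a and wy="b-y0" and ox=a and oy="b-y0-RU" and RR="RU^2"])
    then have "\<exists>v\<in>Pz. (x - fst v)^2 + (y - snd v)^2 \<le> RU^2 - ((x - a)^2 + (y - (b - y0 - RU))^2)"
      by (intro ex3[OF _ pts(1) pts(6) pts(3)]) simp
    then show ?thesis by blast
  next
    case 2
    have h1: "(a - x)*((b - y0) - y) - ((b - y0) - y)*(-a - x) \<ge> 0"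
    proof -
      have "(a - x)*((b - y0) - y) - ((b - y0) - y)*(-a - x) = (2*a)*((b - y0) - y)" by (simp add: algebra_simps)
      then show ?thesis using 2 a by simp
    qed
    have h2: "(-a - x)*(y0 - y) - ((b - y0) - y)*(0 - x) \<ge> 0"
    proof -
      have eq: "(-a - x)*(y0 - y) - ((b - y0) - y)*(0 - x) = (a + x)*(y - y0) + x*((b - y0) - y)" by (simp add: algebra_simps)
      have "0 \<le> (a + x)*(y - y0) + x*((b - y0) - y)" by (intro nn2) (use x y 2 a in linarith)+
      then show ?thesis unfolding eq .
    qed
    have h3: "(0 - x)*((b - y0) - y) - (y0 - y)*(a - x) \<ge> 0" using 2 by (simp add: E1_def)
    have pos: "((a - x)*((b - y0) - y) - ((b - y0) - y)*(-a - x)) + ((-a - x)*(y0 - y) - ((b - y0) - y)*(0 - x))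
        + ((0 - x)*((b - y0) - y) - (y0 - y)*(a - x)) > 0"
    proof -
      have "((a - x)*((b - y0) - y) - ((b - y0) - y)*(-a - x)) + ((-a - x)*(y0 - y) - ((b - y0) - y)*(0 - x))
        + ((0 - x)*((b - y0) - y) - (y0 - y)*(a - x)) = 2 * a * hh" by (simp add: hh_def algebra_simps)
      then show ?thesis using ahp by simp
    qed
    have "(x - 0)^2 + (y - y0)^2 \<le> RU^2 - ((x - 0)^2 + (y - (y0 + RU))^2)
      \<or> (x - a)^2 + (y - (b - y0))^2 \<le> RU^2 - ((x - 0)^2 + (y - (y0 + RU))^2)
      \<or> (x - -a)^2 + (y - (b - y0))^2 \<le> RU^2 - ((x - 0)^2 + (y - (y0 + RU))^2)"
      using h1 h2 h3 pos RUc(4) RUc(5) RUc(6)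
      by (rule tri_bound[where ux=0 and uy=y0 and vx=a and vy="b-y0" and wx="-a" and wy="b-y0" and ox=0 and oy="y0+RU" and RR="RU^2"])
    then have "\<exists>v\<in>Pz. (x - fst v)^2 + (y - snd v)^2 \<le> RU^2 - ((x - 0)^2 + (y - (y0 + RU))^2)"
      by (intro ex3[OF _ pts(1) pts(3) pts(7)]) simp
    then show ?thesis by blast
  next
    case 3
    have h1: "(a - x)*((y0 + b) - y) - ((b - y0) - y)*(0 - x) \<ge> 0" using 3 by (simp add: E2_def)
    have h2: "(0 - x)*((b - y0) - y) - ((y0 + b) - y)*(-a - x) \<ge> 0"
    proof -
      have eq: "(0 - x)*((b - y0) - y) - ((y0 + b) - y)*(-a - x) = x*(y - (b - y0)) + ((y0 + b) - y)*(a + x)"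
        by (simp add: algebra_simps)
      have "0 \<le> x*(y - (b - y0)) + ((y0 + b) - y)*(a + x)" by (intro nn2) (use x y 3 a in linarith)+
      then show ?thesis unfolding eq .
    qed
    have h3: "(-a - x)*((b - y0) - y) - ((b - y0) - y)*(a - x) \<ge> 0"
    proof -
      have "(-a - x)*((b - y0) - y) - ((b - y0) - y)*(a - x) = (2*a)*(y - (b - y0))" by (simp add: algebra_simps)
      then show ?thesis using 3 a by simp
    qed
    have pos: "((a - x)*((y0 + b) - y) - ((b - y0) - y)*(0 - x)) + ((0 - x)*((b - y0) - y) - ((y0 + b) - y)*(-a - x))
        + ((-a - x)*((b - y0) - y) - ((b - y0) - y)*(a - x)) > 0"
    proof -
      have "((a - x)*((y0 + b) - y) - ((b - y0) - y)*(0 - x)) + ((0 - x)*((b - y0) - y) - ((y0 + b) - y)*(-a - x))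
        + ((-a - x)*((b - y0) - y) - ((b - y0) - y)*(a - x)) = 4 * a * y0" by (simp add: algebra_simps)
      then show ?thesis using ay by simp
    qed
    have "(x - -a)^2 + (y - (b - y0))^2 \<le> RD^2 - ((x - 0)^2 + (y - (y0 + b - RD))^2)
      \<or> (x - a)^2 + (y - (b - y0))^2 \<le> RD^2 - ((x - 0)^2 + (y - (y0 + b - RD))^2)
      \<or> (x - 0)^2 + (y - (y0 + b))^2 \<le> RD^2 - ((x - 0)^2 + (y - (y0 + b - RD))^2)"
      using h1 h2 h3 pos RDc(1) RDc(2) RDc(3)
      by (rule tri_bound[where ux="-a" and uy="b-y0" and vx=a and vy="b-y0" and wx=0 and wy="y0+b" and ox=0 and oy="y0+b-RD" and RR="RD^2"])
    then have "\<exists>v\<in>Pz. (x - fst v)^2 + (y - snd v)^2 \<le> RD^2 - ((x - 0)^2 + (y - (y0 + b - RD))^2)"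
      by (intro ex3[OF _ pts(7) pts(3) pts(4)]) simp
    then show ?thesis by blast
  next
    case 4
    have h1: "(a - x)*((y0 + b) - y) - ((b - y0) - y)*(2*a - x) \<ge> 0"
    proof -
      have eq: "(a - x)*((y0 + b) - y) - ((b - y0) - y)*(2*a - x) = (a - x)*((y0 + b) - y) + (2*a - x)*(y - (b - y0))"
        by (simp add: algebra_simps)
      have "0 \<le> (a - x)*((y0 + b) - y) + (2*a - x)*(y - (b - y0))" by (intro nn2) (use x y 4 xa a in linarith)+
      then show ?thesis unfolding eq .
    qed
    have h2: "(2*a - x)*((y0 + b) - y) - ((y0 + b) - y)*(0 - x) \<ge> 0"
    proof -
      have "(2*a - x)*((y0 + b) - y) - ((y0 + b) - y)*(0 - x) = (2*a)*((y0 + b) - y)" by (simp add: algebra_simps)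
      then show ?thesis using y a by simp
    qed
    have h3: "(0 - x)*((b - y0) - y) - ((y0 + b) - y)*(a - x) \<ge> 0"
    proof -
      have "(0 - x)*((b - y0) - y) - ((y0 + b) - y)*(a - x) = - E2" by (simp add: E2_def algebra_simps)
      then show ?thesis using 4 by simp
    qed
    have pos: "((a - x)*((y0 + b) - y) - ((b - y0) - y)*(2*a - x)) + ((2*a - x)*((y0 + b) - y) - ((y0 + b) - y)*(0 - x))
        + ((0 - x)*((b - y0) - y) - ((y0 + b) - y)*(a - x)) > 0"
    proof -
      have "((a - x)*((y0 + b) - y) - ((b - y0) - y)*(2*a - x)) + ((2*a - x)*((y0 + b) - y) - ((y0 + b) - y)*(0 - x))
        + ((0 - x)*((b - y0) - y) - ((y0 + b) - y)*(a - x)) = 4 * a * y0" by (simp add: algebra_simps)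
      then show ?thesis using ay by simp
    qed
    have "(x - 0)^2 + (y - (y0 + b))^2 \<le> RD^2 - ((x - a)^2 + (y - (b - y0 + RD))^2)
      \<or> (x - a)^2 + (y - (b - y0))^2 \<le> RD^2 - ((x - a)^2 + (y - (b - y0 + RD))^2)
      \<or> (x - 2*a)^2 + (y - (y0 + b))^2 \<le> RD^2 - ((x - a)^2 + (y - (b - y0 + RD))^2)"
      using h1 h2 h3 pos RDc(4) RDc(5) RDc(6)
      by (rule tri_bound[where ux=0 and uy="y0+b" and vx=a and vy="b-y0" and wx="2*a" and wy="y0+b" and ox=a and oy="b-y0+RD" and RR="RD^2"])
    then have "\<exists>v\<in>Pz. (x - fst v)^2 + (y - snd v)^2 \<le> RD^2 - ((x - a)^2 + (y - (b - y0 + RD))^2)"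
      by (intro ex3[OF _ pts(4) pts(3) pts(8)]) simp
    then show ?thesis by blast
  qed
qed

lemma reg2_main:
  assumes e0: "e < 0"
  shows "kdist Pz (korbit a b w) \<le> RU"
    and "kdist Pz (korbit a b w) \<ge> RU \<Longrightarrow> w \<in> korbit a b cU \<or> (y0 = b/4 \<and> w \<in> korbit a b cD)"
proof -
  note F = reg2_facts[OF e0]
  obtain w' where w': "w' \<in> korbit a b w" "0 \<le> fst w'" "fst w'\<le> a" "y0 \<le> snd w'" "snd w' \<le> y0 + b"
    using dom by blast
  obtain x y where xy: "w' = (x, y)" by (cases w')
  have kw: "korbit a b w = korbit a b (x, y)" using korbit_mem_eq[OF w'(1)] xy by simp
  have win: "w \<in> korbit a b (x, y)" using kw self_in_korbit by metis
  have M0: "0 \<le> RU" using F(9) by simp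
  have RU2: "RU^2 \<le> RU^2" by simp
  have RD2: "RD^2 \<le> RU^2" using F(11) F(12) by (intro power_mono) auto
  have cL: "korbit a b (0, y0 + RU) = korbit a b cU"
  proof -
    have "(0, y0 + RU) = gel a b (-1) 1 True cU" by (simp add: cU_def gel_def algebra_simps)
    then show ?thesis using korbit_gel by metis
  qed
  have cL': "korbit a b (0, y0 + b - RD) = korbit a b cD"
  proof -
    have "(0, y0 + b - RD) = gel a b (-1) 2 True cD" by (simp add: cD_def gel_def algebra_simps)
    then show ?thesis using korbit_gel by metis
  qed
  have T: "(\<exists>v\<in>Pz. (x - fst v)^2 + (y - snd v)^2 \<le> RU^2 - ((x - a)^2 + (y - (b - y0 - RU))^2))
       \<or> (\<exists>v\<in>Pz. (x - fst v)^2 + (y - snd v)^2 \<le> RU^2 - ((x - 0)^2 + (y - (y0 + RU))^2))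
       \<or> (\<exists>v\<in>Pz. (x - fst v)^2 + (y - snd v)^2 \<le> RD^2 - ((x - 0)^2 + (y - (y0 + b - RD))^2))
       \<or> (\<exists>v\<in>Pz. (x - fst v)^2 + (y - snd v)^2 \<le> RD^2 - ((x - a)^2 + (y - (b - y0 + RD))^2))"
    using reg2_tri[OF e0] w'(2-5) xy by simp
  show "kdist Pz (korbit a b w) \<le> RU"
    using T bound_from_vertex(1)[OF _ _ RU2 M0] bound_from_vertex(1)[OF _ _ RD2 M0] kw by metis
  assume ge: "kdist Pz (korbit a b w) \<ge> RU"
  then have ge': "kdist Pz (korbit a b (x, y)) \<ge> RU" using kw by simp
  have RDU: "RD^2 = RU^2 \<Longrightarrow> y0 = b/4"
  proof -
    assume "RD^2 = RU^2"
    then have "RD = RU" using F(9) F(11) by (simp add: power2_eq_iff_nonneg less_imp_le)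
    then show ?thesis using F(13) by simp
  qed
  from T show "w \<in> korbit a b cU \<or> (y0 = b/4 \<and> w \<in> korbit a b cD)"
  proof (elim disjE bexE)
    fix v assume "v \<in> Pz" "(x - fst v)^2 + (y - snd v)^2 \<le> RU^2 - ((x - a)^2 + (y - (b - y0 - RU))^2)"
    then have "(x, y) = cU" using bound_from_vertex(2)[OF _ _ RU2 M0 ge'] by (simp add: cU_def)
    then show ?thesis using win by simp
  next
    fix v assume "v \<in> Pz" "(x - fst v)^2 + (y - snd v)^2 \<le> RU^2 - ((x - 0)^2 + (y - (y0 + RU))^2)"
    then have "(x, y) = (0, y0 + RU)" using bound_from_vertex(2)[where ox=0 and oy="y0 + RU", OF _ _ RU2 M0 ge'] by blast
    then show ?thesis using win cL by simp
  next
    fix v assume "v \<in> Pz" "(x - fst v)^2 + (y - snd v)^2 \<le> RD^2 - ((x - 0)^2 + (y - (y0 + b - RD))^2)"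
    then have "(x, y) = (0, y0 + b - RD) \<and> RD^2 = RU^2" using bound_from_vertex(2)[where ox=0 and oy="y0 + b - RD", OF _ _ RD2 M0 ge'] by blast
    then show ?thesis using win cL' RDU by simp
  next
    fix v assume "v \<in> Pz" "(x - fst v)^2 + (y - snd v)^2 \<le> RD^2 - ((x - a)^2 + (y - (b - y0 + RD))^2)"
    then have "(x, y) = cD \<and> RD^2 = RU^2" using bound_from_vertex(2)[OF _ _ RD2 M0 ge'] by (simp add: cD_def)
    then show ?thesis using win RDU by simp
  qed
qed

definition "SU = {(0, y0), (2*a, y0), (a, b - y0)}"
definition "SD = {(0, y0 + b), (2*a, y0 + b), (a, b - y0)}"

lemma cU_low:
  assumes e0: "e < 0" and u: "u \<in> Pz"
  shows "(fst u - a)^2 + (snd u - (b - y0 - RU))^2 \<ge> RU^2"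
    and "(fst u - a)^2 + (snd u - (b - y0 - RU))^2 = RU^2 \<Longrightarrow> u \<in> SU"
proof -
  note F = reg2_facts[OF e0]
  have "((fst u - a)^2 + (snd u - (b - y0 - RU))^2 \<ge> RU^2) \<and>
        ((fst u - a)^2 + (snd u - (b - y0 - RU))^2 = RU^2 \<longrightarrow> u \<in> SU)"
  proof (cases rule: orb_cases[OF u])
    case (1 k m)
    have X: "(fst u - a)^2 = (of_int k * (2*a) - a)^2" by (simp add: 1 algebra_simps)
    have Y: "(snd u - (b - y0 - RU))^2 = (of_int m * b - (hh - RU))^2" by (simp add: 1 hh_def algebra_simps)
    have iX: "(of_int k * (2*a) - a)^2 \<ge> a^2 \<and> ((of_int k * (2*a) - a)^2 = a^2 \<longleftrightarrow> k = 0 \<or> (k = 1 \<and> a = 2*a/2))"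
      using int_sq_ge[of "2*a" a k] a by simp
    have iY: "(of_int m * b - (hh - RU))^2 \<ge> (hh - RU)^2 \<and> ((of_int m * b - (hh - RU))^2 = (hh - RU)^2 \<longleftrightarrow> m = 0 \<or> (m = 1 \<and> hh - RU = b/2))"
      using int_sq_ge[of b "hh - RU" m] b F(7) F(8) by simp
    have sm: "a^2 + (hh - RU)^2 = RU^2" using F(5) by (simp add: power2_eq_square algebra_simps)
    show ?thesis
    proof
      show "(fst u - a)^2 + (snd u - (b - y0 - RU))^2 \<ge> RU^2" using sum_min(1)[OF _ _ sm] iX iY X Y by simp
      show "(fst u - a)^2 + (snd u - (b - y0 - RU))^2 = RU^2 \<longrightarrow> u \<in> SU"
      proof
        assume "(fst u - a)^2 + (snd u - (b - y0 - RU))^2 = RU^2"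
        then have "(of_int k * (2*a) - a)^2 = a^2" "(of_int m * b - (hh - RU))^2 = (hh - RU)^2"
          using sum_min(2)[OF _ _ sm] iX iY X Y by auto
        then have "k = 0 \<or> k = 1" "m = 0" using iX iY F(8) by auto
        then show "u \<in> SU" unfolding SU_def using 1 by auto
      qed
    qed
  next
    case (2 k m)
    have X: "(fst u - a)^2 = (of_int k * (2*a))^2" by (simp add: 2 algebra_simps)
    have Y: "(snd u - (b - y0 - RU))^2 = (of_int (1 - m) * b - RU)^2" by (simp add: 2 power2_eq_square algebra_simps)
    have iX: "(of_int k * (2*a))^2 \<ge> 0" by simp
    have iX2: "(of_int k * (2*a))^2 = 0 \<Longrightarrow> k = 0" using a by simp
    have iY: "(of_int (1 - m) * b - RU)^2 \<ge> RU^2 \<and> ((of_int (1 - m) * b - RU)^2 = RU^2 \<longleftrightarrow> 1 - m = 0 \<or> (1 - m = 1 \<and> RU = b/2))"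
      using int_sq_ge[of b RU "1 - m"] b F(9) F(10) by simp
    show ?thesis
    proof
      show "(fst u - a)^2 + (snd u - (b - y0 - RU))^2 \<ge> RU^2" using iX iY X Y by linarith
      show "(fst u - a)^2 + (snd u - (b - y0 - RU))^2 = RU^2 \<longrightarrow> u \<in> SU"
      proof
        assume "(fst u - a)^2 + (snd u - (b - y0 - RU))^2 = RU^2"
        then have "(of_int k * (2*a))^2 = 0" "(of_int (1 - m) * b - RU)^2 = RU^2"
          using iX iY X Y by linarith+
        then have "k = 0" "m = 1" using iX2 iY F(10) by auto
        then show "u \<in> SU" unfolding SU_def using 2 by (auto simp: algebra_simps)
      qed
    qed
  qed
  then show "(fst u - a)^2 + (snd u - (b - y0 - RU))^2 \<ge> RU^2"
    and "(fst u - a)^2 + (snd u - (b - y0 - RU))^2 = RU^2 \<Longrightarrow> u \<in> SU" by auto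
qed

lemma cD_low:
  assumes e0: "e < 0" and q: "y0 = b/4" and u: "u \<in> Pz"
  shows "(fst u - a)^2 + (snd u - (b - y0 + RD))^2 \<ge> RD^2"
    and "(fst u - a)^2 + (snd u - (b - y0 + RD))^2 = RD^2 \<Longrightarrow> u \<in> SD"
proof -
  note F = reg2_facts[OF e0]
  have gq: "gg = b/2" using q by (simp add: gg_def)
  have RDb: "RD < b/2" using F(10) F(12) by simp
  have gR: "0 < gg - RD" "gg - RD < b/2"
  proof -
    have ag: "a^2 < gg^2" using F(14) gq a by (simp add: power_strict_mono)
    have "2*gg*(gg - RD) = gg^2 - a^2" using F(6) by (simp add: power2_eq_square algebra_simps)
    then have hR: "2*gg*(gg - RD) > 0" "2*gg*(gg - RD) < gg * gg" using ag a by (simp_all add: power2_eq_square)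
    show "0 < gg - RD" using hR(1) F(2) by (simp add: zero_less_mult_iff)
    have "gg - RD < gg / 2" using hR(2) F(2) by (simp add: field_simps)
    then show "gg - RD < b/2" using gq b by simp
  qed
  have "((fst u - a)^2 + (snd u - (b - y0 + RD))^2 \<ge> RD^2) \<and>
        ((fst u - a)^2 + (snd u - (b - y0 + RD))^2 = RD^2 \<longrightarrow> u \<in> SD)"
  proof (cases rule: orb_cases[OF u])
    case (1 k m)
    have X: "(fst u - a)^2 = (of_int k * (2*a) - a)^2" by (simp add: 1 algebra_simps)
    have Y: "(snd u - (b - y0 + RD))^2 = (of_int (1 - m) * b - (gg - RD))^2" by (simp add: 1 gg_def power2_eq_square algebra_simps)
    have iX: "(of_int k * (2*a) - a)^2 \<ge> a^2 \<and> ((of_int k * (2*a) - a)^2 = a^2 \<longleftrightarrow> k = 0 \<or> (k = 1 \<and> a = 2*a/2))"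
      using int_sq_ge[of "2*a" a k] a by simp
    have iY: "(of_int (1 - m) * b - (gg - RD))^2 \<ge> (gg - RD)^2 \<and> ((of_int (1 - m) * b - (gg - RD))^2 = (gg - RD)^2 \<longleftrightarrow> 1 - m = 0 \<or> (1 - m = 1 \<and> gg - RD = b/2))"
      using int_sq_ge[of b "gg - RD" "1 - m"] b gR by simp
    have sm: "a^2 + (gg - RD)^2 = RD^2" using F(6) by (simp add: power2_eq_square algebra_simps)
    show ?thesis
    proof
      show "(fst u - a)^2 + (snd u - (b - y0 + RD))^2 \<ge> RD^2" using sum_min(1)[OF _ _ sm] iX iY X Y by simp
      show "(fst u - a)^2 + (snd u - (b - y0 + RD))^2 = RD^2 \<longrightarrow> u \<in> SD"
      proof
        assume "(fst u - a)^2 + (snd u - (b - y0 + RD))^2 = RD^2"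
        then have "(of_int k * (2*a) - a)^2 = a^2" "(of_int (1 - m) * b - (gg - RD))^2 = (gg - RD)^2"
          using sum_min(2)[OF _ _ sm] iX iY X Y by auto
        then have "k = 0 \<or> k = 1" "m = 1" using iX iY gR by auto
        then show "u \<in> SD" unfolding SD_def using 1 by auto
      qed
    qed
  next
    case (2 k m)
    have X: "(fst u - a)^2 = (of_int k * (2*a))^2" by (simp add: 2 algebra_simps)
    have Y: "(snd u - (b - y0 + RD))^2 = (of_int (m - 1) * b - RD)^2" by (simp add: 2 power2_eq_square algebra_simps)
    have iX: "(of_int k * (2*a))^2 \<ge> 0" by simp
    have iX2: "(of_int k * (2*a))^2 = 0 \<Longrightarrow> k = 0" using a by simp
    have iY: "(of_int (m - 1) * b - RD)^2 \<ge> RD^2 \<and> ((of_int (m - 1) * b - RD)^2 = RD^2 \<longleftrightarrow> m - 1 = 0 \<or> (m - 1 = 1 \<and> RD = b/2))"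
      using int_sq_ge[of b RD "m - 1"] b F(11) RDb by simp
    show ?thesis
    proof
      show "(fst u - a)^2 + (snd u - (b - y0 + RD))^2 \<ge> RD^2" using iX iY X Y by linarith
      show "(fst u - a)^2 + (snd u - (b - y0 + RD))^2 = RD^2 \<longrightarrow> u \<in> SD"
      proof
        assume "(fst u - a)^2 + (snd u - (b - y0 + RD))^2 = RD^2"
        then have "(of_int k * (2*a))^2 = 0" "(of_int (m - 1) * b - RD)^2 = RD^2"
          using iX iY X Y by linarith+
        then have "k = 0" "m = 1" using iX2 iY RDb by auto
        then show "u \<in> SD" unfolding SD_def using 2 by (auto simp: algebra_simps)
      qed
    qed
  qed
  then show "(fst u - a)^2 + (snd u - (b - y0 + RD))^2 \<ge> RD^2"
    and "(fst u - a)^2 + (snd u - (b - y0 + RD))^2 = RD^2 \<Longrightarrow> u \<in> SD" by auto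
qed

lemma cU_count:
  assumes e0: "e < 0"
  shows "{u \<in> Pz. dist u cU = RU} = SU" and "\<And>u. u \<in> Pz \<Longrightarrow> dist u cU \<ge> RU"
proof -
  note F = reg2_facts[OF e0]
  have sq: "sqrt (RU^2) = RU" using F(9) by simp
  have ptsU: "u \<in> Pz \<and> (fst u - a)^2 + (snd u - (b - y0 - RU))^2 = RU^2" if uS: "u \<in> SU" for u
  proof -
    have q: "a^2 + (RU - hh)^2 = RU^2" using F(5) by (simp add: power2_eq_square algebra_simps)
    consider "u = (0, y0)" | "u = (2*a, y0)" | "u = (a, b - y0)" using uS unfolding SU_def by auto
    then show ?thesis
    proof cases
      case 1 then show ?thesis using pts q by (simp add: hh_def power2_eq_square algebra_simps)
    next
      case 2 then show ?thesis using pts q by (simp add: hh_def power2_eq_square algebra_simps)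
    next
      case 3 then show ?thesis using pts by simp
    qed
  qed
  have MM: "RU^2 \<ge> 0" by simp
  show "{u \<in> Pz. dist u cU = RU} = SU" "\<And>u. u \<in> Pz \<Longrightarrow> dist u cU \<ge> RU"
    using count_set[where Z=Pz and cx=a and cy="b - y0 - RU" and MM="RU^2" and S=SU, OF cU_low(1)[OF e0] cU_low(2)[OF e0] ptsU MM]
    unfolding cU_def sq by blast+
qed

lemma cD_count:
  assumes e0: "e < 0" and q: "y0 = b/4"
  shows "{u \<in> Pz. dist u cD = RU} = SD" and "\<And>u. u \<in> Pz \<Longrightarrow> dist u cD \<ge> RU"
proof -
  note F = reg2_facts[OF e0]
  have RDU: "RD = RU" using F(13) q by blast
  have sq: "sqrt (RD^2) = RU" using F(11) RDU by simp
  have ptsD: "u \<in> Pz \<and> (fst u - a)^2 + (snd u - (b - y0 + RD))^2 = RD^2" if uS: "u \<in> SD" for u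
  proof -
    have qq: "a^2 + (RD - gg)^2 = RD^2" using F(6) by (simp add: power2_eq_square algebra_simps)
    consider "u = (0, y0 + b)" | "u = (2*a, y0 + b)" | "u = (a, b - y0)" using uS unfolding SD_def by auto
    then show ?thesis
    proof cases
      case 1 then show ?thesis using pts qq by (simp add: gg_def power2_eq_square algebra_simps)
    next
      case 2 then show ?thesis using pts qq by (simp add: gg_def power2_eq_square algebra_simps)
    next
      case 3 then show ?thesis using pts by simp
    qed
  qed
  have MM: "RD^2 \<ge> 0" by simp
  show "{u \<in> Pz. dist u cD = RU} = SD" "\<And>u. u \<in> Pz \<Longrightarrow> dist u cD \<ge> RU"
    using count_set[where Z=Pz and cx=a and cy="b - y0 + RD" and MM="RD^2" and S=SD, OF cD_low(1)[OF e0 q] cD_low(2)[OF e0 q] ptsD MM]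
    unfolding cD_def sq by blast+
qed

lemma reg2_lt:
  assumes e0: "e < 0" and lt: "y0 < b/4"
  shows "card (kfar a b Pz) = 1 \<and> card (kfarn a b 3 Pz) = 1"
proof -
  have up: "\<And>w. kdist Pz (korbit a b w) \<le> RU" using reg2_main(1)[OF e0] .
  have eq: "\<And>w. kdist Pz (korbit a b w) \<ge> RU \<Longrightarrow> \<exists>c\<in>{cU}. w \<in> korbit a b c"
    using reg2_main(2)[OF e0] lt by auto
  have low: "\<And>c u. c \<in> {cU} \<Longrightarrow> u \<in> Pz \<Longrightarrow> RU \<le> dist u c"
    using cU_count(2)[OF e0] by auto
  have A: "kfar a b Pz = korbit a b ` {cU}" "kdist Pz (korbit a b cU) = RU"
    using assemble_kfar(1)[OF up eq low] assemble_kfar(2)[OF up eq low] by simp_all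
  have SUc: "card SU = 3" using a b y00 y01 unfolding SU_def by auto
  have "card (ksegments a b Pz (korbit a b cU)) = 3"
    using segcount[of cU] A(2) cU_count(1)[OF e0] SUc by simp
  then have "kfarn a b 3 Pz = {korbit a b cU}" unfolding kfarn_def A(1) by auto
  then show ?thesis using A(1) by simp
qed

lemma reg2_eq:
  assumes e0: "e < 0" and q: "y0 = b/4"
  shows "card (kfar a b Pz) = 2 \<and> card (kfarn a b 3 Pz) = 2"
proof -
  note F = reg2_facts[OF e0]
  have nc: "cD \<notin> korbit a b cU"
  proof
    assume "cD \<in> korbit a b cU"
    then obtain k m s where ks: "cD = gel a b k m s cU" by (auto simp: in_korbit)
    show False
    proof (cases s)
      case True
      then have "a = a + (2 * of_int k + 1) * a" using ks by (simp add: cD_def cU_def gel_def)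
      then have "(2 * of_int k + 1) * a = 0" by simp
      then have "2 * of_int k + 1 = (0::real)" using a by simp
      then have "2 * k + 1 = 0" by (metis of_int_0 of_int_1 of_int_add of_int_eq_iff of_int_mult of_int_numeral)
      then show False by presburger
    next
      case False
      then have "b - y0 + RD = b - y0 - RU + of_int m * b" using ks by (simp add: cD_def cU_def gel_def)
      moreover have "RD = RU" using F(13) q by blast
      ultimately have mb: "of_int m * b = 2 * RU" by linarith
      then have "of_int m * b > 0" "of_int m * b < b" using F(9) F(10) by simp_all
      then have "of_int m > (0::real)" "of_int m < (1::real)" using b by (simp_all add: zero_less_mult_iff)
      then show False by (metis of_int_0_less_iff of_int_less_1_iff not_less zero_less_iff_neq_zero int_one_le_iff_zero_less)
    qed
  qed
  have ne: "korbit a b cD \<noteq> korbit a b cU" using nc korbit_eq_iff by metis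
  have up: "\<And>w. kdist Pz (korbit a b w) \<le> RU" using reg2_main(1)[OF e0] .
  have eq: "\<And>w. kdist Pz (korbit a b w) \<ge> RU \<Longrightarrow> \<exists>c\<in>{cU, cD}. w \<in> korbit a b c"
    using reg2_main(2)[OF e0] by auto
  have low: "\<And>c u. c \<in> {cU, cD} \<Longrightarrow> u \<in> Pz \<Longrightarrow> RU \<le> dist u c"
    using cU_count(2)[OF e0] cD_count(2)[OF e0 q] by auto
  have A: "kfar a b Pz = korbit a b ` {cU, cD}" "\<And>c. c \<in> {cU, cD} \<Longrightarrow> kdist Pz (korbit a b c) = RU"
    using assemble_kfar(1)[OF up eq low] assemble_kfar(2)[OF up eq low] by simp_all
  have SUc: "card SU = 3" using a b y00 y01 unfolding SU_def by auto
  have SDc: "card SD = 3" using a b y00 y01 unfolding SD_def by auto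
  have s1: "card (ksegments a b Pz (korbit a b cU)) = 3"
    using segcount[of cU] A(2)[of cU] cU_count(1)[OF e0] SUc by simp
  have s2: "card (ksegments a b Pz (korbit a b cD)) = 3"
    using segcount[of cD] A(2)[of cD] cD_count(1)[OF e0 q] SDc by simp
  have "kfarn a b 3 Pz = {korbit a b cU, korbit a b cD}" unfolding kfarn_def A(1) using s1 s2 by auto
  then show ?thesis using A(1) ne by simp
qed

end

lemma abs_half_int: 
  fixes y0 b :: real and j :: int
  assumes "0 \<le> y0" "y0 \<le> b/4" "b > 0"
  shows "\<bar>of_int j * (b/2) - y0\<bar> \<ge> y0"
proof -
  consider "j \<le> 0" | "j \<ge> 1" by linarith
  then show ?thesis
  proof cases
    case 1
    then have "of_int j * (b/2) \<le> 0" using assms by (simp add: mult_nonpos_nonneg)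
    then show ?thesis using assms by linarith
  next
    case 2
    then have "of_int j \<ge> (1::real)" by simp
    then have "of_int j * (b/2) \<ge> 1 * (b/2)" using assms by (intro mult_right_mono) auto
    then show ?thesis using assms by linarith
  qed
qed

context nz
begin

lemma kdist_main_norm: "kdist_main a b Pz = y0"
proof -
  have low: "kdist Pz Q \<ge> y0" if Q: "Q \<in> kmain a b" for Q
  proof -
    obtain x n where Qx: "Q = korbit a b (x, of_int n * b / 2)" using Q unfolding kmain_def by blast
    have "y0 \<le> dist u (x, of_int n * b / 2)" if u: "u \<in> Pz" for u
    proof -
      have d: "\<bar>snd u - of_int n * b / 2\<bar> \<le> dist u (x, of_int n * b / 2)"
        by (metis dist_real_def dist_snd_le snd_conv)
      have "\<bar>snd u - of_int n * b / 2\<bar> \<ge> y0"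
      proof (cases rule: orb_cases[OF u])
        case (1 k m)
        have "snd u - of_int n * b / 2 = - (of_int (n - 2*m) * (b/2) - y0)" by (simp add: 1 algebra_simps)
        then show ?thesis using abs_half_int[OF y00 y01 b, of "n - 2*m"] by simp
      next
        case (2 k m)
        have "snd u - of_int n * b / 2 = - (of_int (n - 2*m) * (b/2) + y0)" by (simp add: 2 algebra_simps)
        moreover have "\<bar>of_int (2*m - n) * (b/2) - y0\<bar> \<ge> y0" using abs_half_int[OF y00 y01 b] by blast
        moreover have "of_int (2*m - n) * (b/2) - y0 = - (of_int (n - 2*m) * (b/2) + y0)" by (simp add: algebra_simps)
        ultimately show ?thesis by simp
      qed
      then show ?thesis using d by linarith
    qed
    then show ?thesis unfolding Qx by (rule kdist_ge)
  qed
  define Q0 where "Q0 = korbit a b (0, 0)"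
  have Q0m: "Q0 \<in> kmain a b" unfolding Q0_def kmain_def by (rule CollectI, rule exI[of _ 0], rule exI[of _ 0]) simp
  have d: "dist (0::real, y0) (0::real, 0::real) = y0" using y00 by (simp add: dist_sq)
  have "kdist Pz Q0 \<le> y0" unfolding Q0_def using kdist_le[OF pts(1), where w="(0::real, 0::real)"] d by simp
  then have Q0e: "kdist Pz Q0 = y0" using low[OF Q0m] by simp
  have "Inf {kdist Pz Q | Q. Q \<in> kmain a b} = y0"
  proof (rule cInf_eq_minimum)
    show "y0 \<in> {kdist Pz Q | Q. Q \<in> kmain a b}" using Q0e Q0m by force
    show "\<And>r. r \<in> {kdist Pz Q | Q. Q \<in> kmain a b} \<Longrightarrow> y0 \<le> r" using low by blast
  qed
  then show ?thesis unfolding kdist_main_def .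
qed

lemma x1_zero: "x1 = 0 \<longleftrightarrow> e = 0"
  using a by (simp add: x1_def)

lemma outcome:
  shows "y0 = 0 \<Longrightarrow> card (kfar a b Pz) = 1 \<and> card (kfarn a b 4 Pz) = 1"
    and "e = 0 \<Longrightarrow> card (kfar a b Pz) = 1 \<and> card (kfarn a b 4 Pz) = 1"
    and "e > 0 \<Longrightarrow> y0 \<noteq> 0 \<Longrightarrow> card (kfar a b Pz) = 2 \<and> card (kfarn a b 3 Pz) = 2"
    and "e < 0 \<Longrightarrow> y0 < b/4 \<Longrightarrow> card (kfar a b Pz) = 1 \<and> card (kfarn a b 3 Pz) = 1"
    and "e < 0 \<Longrightarrow> y0 = b/4 \<Longrightarrow> card (kfar a b Pz) = 2 \<and> card (kfarn a b 3 Pz) = 2"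
proof -
  show "y0 = 0 \<Longrightarrow> card (kfar a b Pz) = 1 \<and> card (kfarn a b 4 Pz) = 1"
  proof -
    assume h: "y0 = 0"
    have "e = a^2 - 2*b*y0 + 4*y0^2" by (simp add: e_def)
    then have "e \<ge> 0" using h by simp
    then show ?thesis using reg1_special h by blast
  qed
  show "e = 0 \<Longrightarrow> card (kfar a b Pz) = 1 \<and> card (kfarn a b 4 Pz) = 1"
    using reg1_special x1_zero by simp
  show "e > 0 \<Longrightarrow> y0 \<noteq> 0 \<Longrightarrow> card (kfar a b Pz) = 2 \<and> card (kfarn a b 3 Pz) = 2"
    using reg1_generic x1_zero by simp
  show "e < 0 \<Longrightarrow> y0 < b/4 \<Longrightarrow> card (kfar a b Pz) = 1 \<and> card (kfarn a b 3 Pz) = 1"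
    using reg2_lt by simp
  show "e < 0 \<Longrightarrow> y0 = b/4 \<Longrightarrow> card (kfar a b Pz) = 2 \<and> card (kfarn a b 3 Pz) = 2"
    using reg2_eq by simp
qed

end

theorem mainTheorem4:
  fixes a b :: real and P :: "(real \<times> real) set"
  assumes "a > 0" and "b > 0" and "P \<in> klein a b"
  defines "lam \<equiv> 2 * kdist_main a b P / b"
      and "lam0 \<equiv> 1/2 - sqrt (1/4 - a\<^sup>2 / b\<^sup>2)"
  shows "(0 \<le> lam \<and> lam \<le> 1/2)
    \<and> (b < 2 * a \<longrightarrow>
         (lam = 0 \<longrightarrow> card (kfar a b P) = 1 \<and> card (kfarn a b 4 P) = 1)
       \<and> (lam \<noteq> 0 \<longrightarrow> card (kfar a b P) = 2 \<and> card (kfarn a b 3 P) = 2))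
    \<and> (b = 2 * a \<longrightarrow>
         ((lam = 0 \<or> lam = 1/2) \<longrightarrow> card (kfar a b P) = 1 \<and> card (kfarn a b 4 P) = 1)
       \<and> (lam \<noteq> 0 \<and> lam \<noteq> 1/2 \<longrightarrow> card (kfar a b P) = 2 \<and> card (kfarn a b 3 P) = 2))
    \<and> (b > 2 * a \<longrightarrow>
         (lam = 0 \<longrightarrow> card (kfar a b P) = 1 \<and> card (kfarn a b 4 P) = 1)
       \<and> (0 < lam \<and> lam < lam0 \<longrightarrow> card (kfar a b P) = 2 \<and> card (kfarn a b 3 P) = 2)
       \<and> (lam = lam0 \<longrightarrow> card (kfar a b P) = 1 \<and> card (kfarn a b 4 P) = 1)
       \<and> (lam0 < lam \<and> lam < 1/2 \<longrightarrow> card (kfar a b P) = 1 \<and> card (kfarn a b 3 P) = 1)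
       \<and> (lam = 1/2 \<longrightarrow> card (kfar a b P) = 2 \<and> card (kfarn a b 3 P) = 2))"
  proof -
  obtain y0 where y0: "0 \<le> y0" "y0 \<le> b/4" and iv: "inveq a b P (korbit a b (0, y0))"
    using normalize[OF assms(1) assms(2) assms(3)] by blast
  interpret nz a b y0 using assms(1,2) y0 by unfold_locales auto
  have km: "kdist_main a b P = y0" using iv kdist_main_norm unfolding inveq_def by simp
  have cf: "card (kfar a b P) = card (kfar a b Pz)" using iv unfolding inveq_def by simp
  have cn: "\<And>n. card (kfarn a b n P) = card (kfarn a b n Pz)" using iv unfolding inveq_def by simp
  have lam: "lam = 2*y0/b" unfolding lam_def km ..
  have bp: "b > 0" and ap: "a > 0" using assms by simp_all
  have ee: "e = a^2 - 2*b*y0 + 4*y0^2" by (simp add: e_def)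
  have l0: "lam = 0 \<longleftrightarrow> y0 = 0" using bp by (simp add: lam)
  have lh: "lam = 1/2 \<longleftrightarrow> y0 = b/4" using bp by (auto simp: lam field_simps)
  have lr: "0 \<le> lam \<and> lam \<le> 1/2" using bp y0 by (simp add: lam field_simps)
  note O = outcome
  have c1: "b < 2 * a \<longrightarrow>
         (lam = 0 \<longrightarrow> card (kfar a b Pz) = 1 \<and> card (kfarn a b 4 Pz) = 1)
       \<and> (lam \<noteq> 0 \<longrightarrow> card (kfar a b Pz) = 2 \<and> card (kfarn a b 3 Pz) = 2)"
  proof
    assume h: "b < 2 * a"
    have "(b/2)^2 < a^2" using h bp by (intro power_strict_mono) auto
    moreover have "e = (2*y0 - b/2)^2 + (a^2 - (b/2)^2)" unfolding ee by (simp add: power2_eq_square algebra_simps)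
    ultimately have "e > 0" by (smt (verit) zero_le_power2)
    then show "(lam = 0 \<longrightarrow> card (kfar a b Pz) = 1 \<and> card (kfarn a b 4 Pz) = 1)
       \<and> (lam \<noteq> 0 \<longrightarrow> card (kfar a b Pz) = 2 \<and> card (kfarn a b 3 Pz) = 2)"
      using O(1) O(3) l0 by blast
  qed
  have c2: "b = 2 * a \<longrightarrow>
         ((lam = 0 \<or> lam = 1/2) \<longrightarrow> card (kfar a b Pz) = 1 \<and> card (kfarn a b 4 Pz) = 1)
       \<and> (lam \<noteq> 0 \<and> lam \<noteq> 1/2 \<longrightarrow> card (kfar a b Pz) = 2 \<and> card (kfarn a b 3 Pz) = 2)"
  proof
    assume h: "b = 2 * a"
    have ea: "e = (a - 2*y0)^2"
    proof -
      have "e = a^2 - 2*(2*a)*y0 + 4*y0^2" using ee h by simp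
      then show ?thesis by (simp add: power2_eq_square algebra_simps)
    qed
    have e0: "e = 0 \<longleftrightarrow> y0 = b/4"
    proof -
      have "e = 0 \<longleftrightarrow> a = 2*y0" using ea by simp
      then show ?thesis using h by auto
    qed
    have "e \<ge> 0" unfolding ea by simp
    then show "((lam = 0 \<or> lam = 1/2) \<longrightarrow> card (kfar a b Pz) = 1 \<and> card (kfarn a b 4 Pz) = 1)
       \<and> (lam \<noteq> 0 \<and> lam \<noteq> 1/2 \<longrightarrow> card (kfar a b Pz) = 2 \<and> card (kfarn a b 3 Pz) = 2)"
      using O(1) O(2) O(3) l0 lh e0 by force
  qed
  have c3: "b > 2 * a \<longrightarrow>
         (lam = 0 \<longrightarrow> card (kfar a b Pz) = 1 \<and> card (kfarn a b 4 Pz) = 1)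
       \<and> (0 < lam \<and> lam < lam0 \<longrightarrow> card (kfar a b Pz) = 2 \<and> card (kfarn a b 3 Pz) = 2)
       \<and> (lam = lam0 \<longrightarrow> card (kfar a b Pz) = 1 \<and> card (kfarn a b 4 Pz) = 1)
       \<and> (lam0 < lam \<and> lam < 1/2 \<longrightarrow> card (kfar a b Pz) = 1 \<and> card (kfarn a b 3 Pz) = 1)
       \<and> (lam = 1/2 \<longrightarrow> card (kfar a b Pz) = 2 \<and> card (kfarn a b 3 Pz) = 2)"
  proof
    assume h: "b > 2 * a"
    define sq0 where "sq0 = sqrt (1/4 - a^2/b^2)"
    have ab2: "a^2/b^2 < 1/4"
    proof -
      have "(2*a)^2 < b^2" using h ap by (intro power_strict_mono) auto
      then show ?thesis using bp by (simp add: field_simps power2_eq_square)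
    qed
    have s2: "sq0^2 = 1/4 - a^2/b^2" unfolding sq0_def using ab2 by simp
    have sp: "sq0 > 0" unfolding sq0_def using ab2 by simp
    have bs: "b^2 * sq0^2 = b^2/4 - a^2" unfolding s2 using bp by (simp add: field_simps)
    have l0s: "lam0 = 1/2 - sq0" unfolding lam0_def sq0_def ..
    define D where "D = 2*y0 - b/2 + b* sq0"
    have ef: "e = (2*y0 - b/2 - b* sq0) * D"
    proof -
      have "(2*y0 - b/2 - b* sq0) * D = (2*y0 - b/2)^2 - b^2 * sq0^2" unfolding D_def by (simp add: power2_eq_square algebra_simps)
      also have "\<dots> = e" unfolding bs ee by (simp add: power2_eq_square algebra_simps)
      finally show ?thesis by simp
    qed
    have bsp: "b * sq0 > 0" using bp sp by simp
    have neg: "2*y0 - b/2 - b* sq0 < 0" using y0 bsp by linarith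
    have lD: "lam < lam0 \<longleftrightarrow> D < 0" "lam = lam0 \<longleftrightarrow> D = 0"
      using bp by (auto simp: lam l0s D_def field_simps)
    have eD: "e > 0 \<longleftrightarrow> D < 0" "e = 0 \<longleftrightarrow> D = 0" "e < 0 \<longleftrightarrow> D > 0"
      using neg unfolding ef by (auto simp: zero_less_mult_iff mult_less_0_iff)
    have lam0h: "lam0 < 1/2" using sp l0s by simp
    have lam0p: "lam0 > 0"
    proof -
      have "1/4 - a^2/b^2 < 1/4" using ap bp by simp
      then have "sq0 < sqrt (1/4)" unfolding sq0_def by (simp add: real_sqrt_less_iff)
      moreover have "sqrt (1/4::real) = 1/2" by (simp add: real_sqrt_divide)
      ultimately show ?thesis using l0s by simp
    qed
    have i1: "lam = 0 \<longrightarrow> card (kfar a b Pz) = 1 \<and> card (kfarn a b 4 Pz) = 1" using O(1) l0 by simp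
    have i2: "0 < lam \<and> lam < lam0 \<longrightarrow> card (kfar a b Pz) = 2 \<and> card (kfarn a b 3 Pz) = 2"
    proof
      assume "0 < lam \<and> lam < lam0"
      then have "e > 0" "y0 \<noteq> 0" using lD eD l0 by auto
      then show "card (kfar a b Pz) = 2 \<and> card (kfarn a b 3 Pz) = 2" using O(3) by simp
    qed
    have i3: "lam = lam0 \<longrightarrow> card (kfar a b Pz) = 1 \<and> card (kfarn a b 4 Pz) = 1"
    proof
      assume "lam = lam0"
      then have "e = 0" using lD eD by simp
      then show "card (kfar a b Pz) = 1 \<and> card (kfarn a b 4 Pz) = 1" using O(2) by simp
    qed
    have i4: "lam0 < lam \<and> lam < 1/2 \<longrightarrow> card (kfar a b Pz) = 1 \<and> card (kfarn a b 3 Pz) = 1"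
    proof
      assume h2: "lam0 < lam \<and> lam < 1/2"
      then have "\<not> lam < lam0" "lam \<noteq> lam0" by auto
      then have "e < 0" using lD eD by auto
      moreover have "y0 < b/4" using h2 bp by (simp add: lam field_simps)
      ultimately show "card (kfar a b Pz) = 1 \<and> card (kfarn a b 3 Pz) = 1" using O(4) by simp
    qed
    have i5: "lam = 1/2 \<longrightarrow> card (kfar a b Pz) = 2 \<and> card (kfarn a b 3 Pz) = 2"
    proof
      assume h2: "lam = 1/2"
      then have "\<not> lam < lam0" "lam \<noteq> lam0" using lam0h by auto
      then have "e < 0" using lD eD by auto
      moreover have "y0 = b/4" using h2 lh by simp
      ultimately show "card (kfar a b Pz) = 2 \<and> card (kfarn a b 3 Pz) = 2" using O(5) by simp
    qed
    show "(lam = 0 \<longrightarrow> card (kfar a b Pz) = 1 \<and> card (kfarn a b 4 Pz) = 1)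
       \<and> (0 < lam \<and> lam < lam0 \<longrightarrow> card (kfar a b Pz) = 2 \<and> card (kfarn a b 3 Pz) = 2)
       \<and> (lam = lam0 \<longrightarrow> card (kfar a b Pz) = 1 \<and> card (kfarn a b 4 Pz) = 1)
       \<and> (lam0 < lam \<and> lam < 1/2 \<longrightarrow> card (kfar a b Pz) = 1 \<and> card (kfarn a b 3 Pz) = 1)
       \<and> (lam = 1/2 \<longrightarrow> card (kfar a b Pz) = 2 \<and> card (kfarn a b 3 Pz) = 2)"
      using i1 i2 i3 i4 i5 by blast
  qed
  show ?thesis unfolding cf cn using lr c1 c2 c3 by blast
qed

end
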